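(* Let $\mathcal R$ be a left-linear TRS which is terminating modulo $\mathcal B$. Then $\mathcal R$ is Church–Rosser modulo $\mathcal B$ if and only if $\mathrm{PCP}(\mathcal R)\cup\mathrm{PCP}^\pm(\mathcal R,\mathcal B^\pm)\subseteq\ \downarrow^\sim_{\mathcal R}$.
   Context: Terms are built from a signature $\mathcal F$ and variables $\mathcal V$. A rule $\ell\to r$ is a pair of terms with $\ell\notin\mathcal V$ and $\mathrm{Var}(r)\subseteq\mathrm{Var}(\ell)$; a TRS is a set of rules, an ES a set of equations; a TRS is left-linear if no left-hand side contains a variable twice. For a set $\mathcal E$ of pairs of terms, $s\to_{\mathcal E}t$ iff $s|_p=\ell\sigma$ and $t=s[r\sigma]_p$ for some $(\ell,r)\in\mathcal E$, position $p$ and substitution $\sigma$; $\leftarrow_{\mathcal E}$ is its inverse. $\mathcal B$ is a fixed ES with $\mathrm{Var}(\ell)=\mathrm{Var}(r)$ for all $\ell\approx r\in\mathcal B$; $\sim_{\mathcal B}=\leftrightarrow^*_{\mathcal B}$ and $\mathcal B^\pm=\mathcal B\cup\{t\approx s\mid s\approx t\in\mathcal B\}$. For a TRS $\mathcal R$: $\to_{\mathcal R/\mathcal B}=\sim_{\mathcal B}\cdot\to_{\mathcal R}\cdot\sim_{\mathcal B}$; $s\downarrow^\sim_{\mathcal R}t$ iff $s\to^*_{\mathcal R}\cdot\sim_{\mathcal B}\cdot\leftarrow^*_{\mathcal R}t$. $\mathcal R$ is terminating modulo $\mathcal B$ if there is no infinite $\to_{\mathcal R/\mathcal B}$-sequence,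 and Church–Rosser modulo $\mathcal B$ if $\leftrightarrow^*_{\mathcal R\cup\mathcal B}\subseteq\ \downarrow^\sim_{\mathcal R}$. Critical pairs: for sets of oriented pairs $\mathcal R_1,\mathcal R_2$ (equations of $\mathcal B^\pm$ read as oriented pairs), an overlap is $\langle\ell_1\to r_1,p,\ell_2\to r_2\rangle$ with $\ell_i\to r_i$ variants of elements of $\mathcal R_i$ without common variables, $p$ a non-variable position of $\ell_2$, $\ell_1$ and $\ell_2|_p$ unifiable, and the two rules not variants of each other if $p=\epsilon$. With an mgu $\sigma$ this yields the critical peak $\ell_2\sigma[r_1\sigma]_p\leftarrow^p\ell_2\sigma\to^\epsilon r_2\sigma$ and critical pair $\ell_2\sigma[r_1\sigma]_p\approx r_2\sigma$. A critical peak $t\leftarrow^p s\to^\epsilon u$ is prime if all proper subterms of $s|_p$ are normal forms of $\to_{\mathcal R}$ (irreducibility is always checked w.r.t. $\mathcal R$, also for overlaps involving $\mathcal B^\pm$). $\mathrm{PCP}(\mathcal R)$ is the set of prime critical pairs from overlaps of $\mathcal R$ with itself; $\mathrm{PCP}^\pm(\mathcal R,\mathcal B^\pm)$ is the set of prime critical pairs from overlaps $\langle\rho_1,p,\rho_2\rangle$ with $\rho_1\in\mathcal R,\rho_2\in\mathcal B^\pm$ or $\rho_1\in\mathcal B^\pm,\rho_2\in\mathcal R$. The inclusion of a set of equations in a relation means each $s\approx t$ in the set satisfies $s\downarrow^\sim_{\mathcal R}t$. *)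

theory Defs
  imports Main
begin

datatype ('f, 'v) "term" = Var 'v | Fun 'f "('f, 'v) term list"

type_synonym ('f, 'v) rule = "('f, 'v) term \<times> ('f, 'v) term"
type_synonym ('f, 'v) subst = "'v \<Rightarrow> ('f, 'v) term"
type_synonym pos = "nat list"

fun subst_apply :: "('f, 'v) term \<Rightarrow> ('f, 'v) subst \<Rightarrow> ('f, 'v) term" (infixl "\<cdot>" 67) where
  "Var x \<cdot> \<sigma> = \<sigma> x"
| "Fun f ts \<cdot> \<sigma> = Fun f (map (\<lambda>t. t \<cdot> \<sigma>) ts)"

fun vars_term :: "('f, 'v) term \<Rightarrow> 'v set" where
  "vars_term (Var x) = {x}"
| "vars_term (Fun f ts) = (\<Union>t \<in> set ts. vars_term t)"

fun vars_term_list :: "('f, 'v) term \<Rightarrow> 'v list" where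
  "vars_term_list (Var x) = [x]"
| "vars_term_list (Fun f ts) = concat (map vars_term_list ts)"

definition linear_term :: "('f, 'v) term \<Rightarrow> bool" where
  "linear_term t \<longleftrightarrow> distinct (vars_term_list t)"

definition vars_rule :: "('f, 'v) rule \<Rightarrow> 'v set" where
  "vars_rule \<rho> = vars_term (fst \<rho>) \<union> vars_term (snd \<rho>)"

lemma size_nth_less_term [termination_simp]:
  "i < length ts \<Longrightarrow> size (ts ! i) < Suc (size_list size ts)"
  by (metis less_Suc_eq_le nth_mem order.refl size_list_estimation')

fun poss :: "('f, 'v) term \<Rightarrow> pos set" where
  "poss (Var x) = {[]}"
| "poss (Fun f ts) = insert [] (\<Union>i \<in> {..<length ts}. (\<lambda>p. i # p) ` poss (ts ! i))"

fun subt_at :: "('f, 'v) term \<Rightarrow> pos \<Rightarrow> ('f, 'v) term" (infixl "|'_" 67) where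
  "subt_at t [] = t"
| "subt_at (Var x) (i # p) = Var x"
| "subt_at (Fun f ts) (i # p) = (if i < length ts then subt_at (ts ! i) p else Fun f ts)"

definition fun_poss :: "('f, 'v) term \<Rightarrow> pos set" where
  "fun_poss t = {p \<in> poss t. \<forall>x. subt_at t p \<noteq> Var x}"

fun replace_at :: "('f, 'v) term \<Rightarrow> pos \<Rightarrow> ('f, 'v) term \<Rightarrow> ('f, 'v) term" where
  "replace_at t [] s = s"
| "replace_at (Var x) (i # p) s = Var x"
| "replace_at (Fun f ts) (i # p) s =
     (if i < length ts then Fun f (ts[i := replace_at (ts ! i) p s]) else Fun f ts)"

definition rstep :: "('f, 'v) rule set \<Rightarrow> (('f, 'v) term \<times> ('f, 'v) term) set" where
  "rstep E = {(s, t). \<exists>l r p \<sigma>. (l, r) \<in> E \<and> p \<in> poss s \<and> subt_at s p = l \<cdot> \<sigma>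
                          \<and> t = replace_at s p (r \<cdot> \<sigma>)}"

definition NF :: "('f, 'v) rule set \<Rightarrow> ('f, 'v) term \<Rightarrow> bool" where
  "NF R t \<longleftrightarrow> (\<nexists>u. (t, u) \<in> rstep R)"

definition wf_trs :: "('f, 'v) rule set \<Rightarrow> bool" where
  "wf_trs R \<longleftrightarrow> (\<forall>(l, r) \<in> R. (\<forall>x. l \<noteq> Var x) \<and> vars_term r \<subseteq> vars_term l)"

definition left_linear :: "('f, 'v) rule set \<Rightarrow> bool" where
  "left_linear R \<longleftrightarrow> (\<forall>(l, r) \<in> R. linear_term l)"

definition var_preserving :: "('f, 'v) rule set \<Rightarrow> bool" where
  "var_preserving B \<longleftrightarrow> (\<forall>(l, r) \<in> B. vars_term l = vars_term r)"

definition Bpm :: "('f, 'v) rule set \<Rightarrow> ('f, 'v) rule set" where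
  "Bpm B = B \<union> {(t, s) | s t. (s, t) \<in> B}"

definition conv :: "('f, 'v) rule set \<Rightarrow> (('f, 'v) term \<times> ('f, 'v) term) set" where
  "conv E = (rstep E \<union> (rstep E)\<inverse>)\<^sup>*"

definition simB :: "('f, 'v) rule set \<Rightarrow> (('f, 'v) term \<times> ('f, 'v) term) set" where
  "simB B = conv B"

definition relmod :: "('f, 'v) rule set \<Rightarrow> ('f, 'v) rule set \<Rightarrow> (('f, 'v) term \<times> ('f, 'v) term) set" where
  "relmod R B = simB B O rstep R O simB B"

definition join_mod :: "('f, 'v) rule set \<Rightarrow> ('f, 'v) rule set \<Rightarrow> (('f, 'v) term \<times> ('f, 'v) term) set" where
  "join_mod R B = (rstep R)\<^sup>* O simB B O ((rstep R)\<^sup>*)\<inverse>"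

definition terminating_mod :: "('f, 'v) rule set \<Rightarrow> ('f, 'v) rule set \<Rightarrow> bool" where
  "terminating_mod R B \<longleftrightarrow> (\<nexists>f. \<forall>i. (f i, f (Suc i)) \<in> relmod R B)"

definition CR_mod :: "('f, 'v) rule set \<Rightarrow> ('f, 'v) rule set \<Rightarrow> bool" where
  "CR_mod R B \<longleftrightarrow> conv (R \<union> B) \<subseteq> join_mod R B"

definition rename_rule :: "('v \<Rightarrow> 'v) \<Rightarrow> ('f, 'v) rule \<Rightarrow> ('f, 'v) rule" where
  "rename_rule \<pi> \<rho> = (fst \<rho> \<cdot> (Var \<circ> \<pi>), snd \<rho> \<cdot> (Var \<circ> \<pi>))"

definition variant_of :: "('f, 'v) rule \<Rightarrow> ('f, 'v) rule \<Rightarrow> bool" where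
  "variant_of \<rho> \<rho>' \<longleftrightarrow> (\<exists>\<pi>. bij \<pi> \<and> \<rho> = rename_rule \<pi> \<rho>')"

definition unifiable :: "('f, 'v) term \<Rightarrow> ('f, 'v) term \<Rightarrow> bool" where
  "unifiable s t \<longleftrightarrow> (\<exists>\<sigma>. s \<cdot> \<sigma> = t \<cdot> \<sigma>)"

definition is_mgu :: "('f, 'v) subst \<Rightarrow> ('f, 'v) term \<Rightarrow> ('f, 'v) term \<Rightarrow> bool" where
  "is_mgu \<sigma> s t \<longleftrightarrow> s \<cdot> \<sigma> = t \<cdot> \<sigma> \<and>
     (\<forall>\<tau>. s \<cdot> \<tau> = t \<cdot> \<tau> \<longrightarrow> (\<exists>\<delta>. \<forall>x. \<tau> x = \<sigma> x \<cdot> \<delta>))"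

definition overlap :: "('f, 'v) rule set \<Rightarrow> ('f, 'v) rule set \<Rightarrow>
    ('f, 'v) rule \<Rightarrow> pos \<Rightarrow> ('f, 'v) rule \<Rightarrow> bool" where
  "overlap R1 R2 \<rho>1 p \<rho>2 \<longleftrightarrow>
     (\<exists>\<rho>\<in>R1. variant_of \<rho>1 \<rho>) \<and> (\<exists>\<rho>\<in>R2. variant_of \<rho>2 \<rho>) \<and>
     vars_rule \<rho>1 \<inter> vars_rule \<rho>2 = {} \<and>
     p \<in> fun_poss (fst \<rho>2) \<and>
     unifiable (fst \<rho>1) (subt_at (fst \<rho>2) p) \<and>
     (p = [] \<longrightarrow> \<not> variant_of \<rho>1 \<rho>2)"

definition pcp_gen :: "('f, 'v) rule set \<Rightarrow> ('f, 'v) rule set \<Rightarrow> ('f, 'v) rule set \<Rightarrow>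
    (('f, 'v) term \<times> ('f, 'v) term) set" where
  "pcp_gen R1 R2 R = {(replace_at (fst \<rho>2 \<cdot> \<sigma>) p (snd \<rho>1 \<cdot> \<sigma>), snd \<rho>2 \<cdot> \<sigma>) | \<rho>1 p \<rho>2 \<sigma>.
      overlap R1 R2 \<rho>1 p \<rho>2 \<and> is_mgu \<sigma> (fst \<rho>1) (subt_at (fst \<rho>2) p) \<and>
      (\<forall>q \<in> poss (subt_at (fst \<rho>2 \<cdot> \<sigma>) p). q \<noteq> [] \<longrightarrow>
          NF R (subt_at (subt_at (fst \<rho>2 \<cdot> \<sigma>) p) q))}"

definition PCP :: "('f, 'v) rule set \<Rightarrow> (('f, 'v) term \<times> ('f, 'v) term) set" where
  "PCP R = pcp_gen R R R"

definition PCPpm :: "('f, 'v) rule set \<Rightarrow> ('f, 'v) rule set \<Rightarrow> (('f, 'v) term \<times> ('f, 'v) term) set" where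
  "PCPpm R Bp = pcp_gen R Bp R \<union> pcp_gen Bp R R"

end

theory Submission
  imports Defs
begin



lemma subst_Var[simp]: "t \<cdot> Var = t"
  by (induction t) (auto simp: map_idI)

lemma subst_comp: "t \<cdot> \<sigma> \<cdot> \<tau> = t \<cdot> (\<lambda>x. \<sigma> x \<cdot> \<tau>)"
  by (induction t) auto

lemma subst_agree: "(\<And>x. x \<in> vars_term t \<Longrightarrow> \<sigma> x = \<tau> x) \<Longrightarrow> t \<cdot> \<sigma> = t \<cdot> \<tau>"
  by (induction t) auto

lemma subst_agree_rev: "t \<cdot> \<sigma> = t \<cdot> \<tau> \<Longrightarrow> x \<in> vars_term t \<Longrightarrow> \<sigma> x = \<tau> x"
proof (induction t)
  case (Var y) then show ?case by simp
next
  case (Fun f ts)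
  then obtain u where u: "u \<in> set ts" "x \<in> vars_term u" by auto
  from Fun(2) have "map (\<lambda>t. t \<cdot> \<sigma>) ts = map (\<lambda>t. t \<cdot> \<tau>) ts" by simp
  with u have "u \<cdot> \<sigma> = u \<cdot> \<tau>" by (simp add: map_eq_conv)
  with Fun u show ?case by blast
qed

lemma vars_subst: "vars_term (t \<cdot> \<sigma>) = (\<Union>x\<in>vars_term t. vars_term (\<sigma> x))"
  by (induction t) auto

lemma set_vars_term_list[simp]: "set (vars_term_list t) = vars_term t"
  by (induction t) auto

lemma finite_vars_term[simp]: "finite (vars_term t)"
  by (induction t) auto

lemma size_subst_le: "x \<in> vars_term t \<Longrightarrow> size (\<sigma> x) \<le> size (t \<cdot> \<sigma>)"
proof (induction t)
  case (Var y) then show ?case by simp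
next
  case (Fun f ts)
  then obtain u where u: "u \<in> set ts" "x \<in> vars_term u" by auto
  then have "size (\<sigma> x) \<le> size (u \<cdot> \<sigma>)" using Fun by blast
  moreover have "size (u \<cdot> \<sigma>) < size (Fun f ts \<cdot> \<sigma>)" using u(1)
    by (simp add: size_list_estimation' less_Suc_eq_le)
  ultimately show ?case by simp
qed

lemma size_subst_less: assumes "x \<in> vars_term t" "t \<noteq> Var x" shows "size (\<sigma> x) < size (t \<cdot> \<sigma>)"
proof (cases t)
  case (Var y) then show ?thesis using assms by auto
next
  case (Fun f ts)
  with assms obtain u where u: "u \<in> set ts" "x \<in> vars_term u" by auto
  then have "size (\<sigma> x) \<le> size (u \<cdot> \<sigma>)" using size_subst_le[of x u \<sigma>] by blast
  moreover have "size (u \<cdot> \<sigma>) < size (Fun f ts \<cdot> \<sigma>)" using u(1)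
    by (simp add: size_list_estimation' less_Suc_eq_le)
  ultimately show ?thesis using Fun by simp
qed




lemma Nil_poss[simp]: "[] \<in> poss t"
  by (cases t) auto

lemma poss_Cons_Fun[simp]: "(i # p \<in> poss (Fun f ts)) \<longleftrightarrow> i < length ts \<and> p \<in> poss (ts ! i)"
  by auto

declare poss.simps(2)[simp del]

lemma poss_Fun: "p \<in> poss (Fun f ts) \<longleftrightarrow> p = [] \<or> (\<exists>i p'. p = i # p' \<and> i < length ts \<and> p' \<in> poss (ts ! i))"
  by (cases p) auto

lemma poss_Cons_Var[simp]: "i # p \<notin> poss (Var x)"
  by auto

lemma poss_append: "(p @ q \<in> poss t) \<longleftrightarrow> p \<in> poss t \<and> q \<in> poss (t |_ p)"
proof (induction p arbitrary: t)
  case Nil then show ?case by simp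
next
  case (Cons i p)
  then show ?case by (cases t) auto
qed

lemma subt_at_append: "p \<in> poss t \<Longrightarrow> t |_ (p @ q) = (t |_ p) |_ q"
proof (induction p arbitrary: t)
  case Nil then show ?case by simp
next
  case (Cons i p)
  then show ?case by (cases t) auto
qed

lemma replace_at_subt[simp]: "p \<in> poss t \<Longrightarrow> replace_at t p s |_ p = s"
proof (induction p arbitrary: t)
  case Nil then show ?case by simp
next
  case (Cons i p)
  then show ?case by (cases t) auto
qed

lemma replace_at_poss[simp]: "p \<in> poss t \<Longrightarrow> p \<in> poss (replace_at t p s)"
proof (induction p arbitrary: t)
  case Nil then show ?case by simp
next
  case (Cons i p)
  then show ?case by (cases t) auto
qed

lemma replace_at_id[simp]: "p \<in> poss t \<Longrightarrow> replace_at t p (t |_ p) = t"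
proof (induction p arbitrary: t)
  case Nil then show ?case by simp
next
  case (Cons i p)
  then show ?case by (cases t) auto
qed

lemma replace_at_replace_at[simp]: "p \<in> poss t \<Longrightarrow> replace_at (replace_at t p s) p s' = replace_at t p s'"
proof (induction p arbitrary: t)
  case Nil then show ?case by simp
next
  case (Cons i p)
  then show ?case by (cases t) auto
qed

lemma replace_at_append: "p \<in> poss t \<Longrightarrow> replace_at t (p @ q) s = replace_at t p (replace_at (t |_ p) q s)"
proof (induction p arbitrary: t)
  case Nil then show ?case by simp
next
  case (Cons i p)
  then show ?case by (cases t) auto
qed

definition par :: "pos \<Rightarrow> pos \<Rightarrow> bool" where
  "par p q \<longleftrightarrow> (\<nexists>r. q = p @ r) \<and> (\<nexists>r. p = q @ r)"

lemma par_Cons: "par (i # p) (j # q) \<longleftrightarrow> i \<noteq> j \<or> par p q"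
  unfolding par_def by auto

lemma par_Nil: "\<not> par [] q" "\<not> par p []"
  unfolding par_def by auto

lemma par_sym: "par p q \<Longrightarrow> par q p"
  unfolding par_def by auto

lemma par_poss_replace:
  "par p q \<Longrightarrow> p \<in> poss t \<Longrightarrow> q \<in> poss t \<Longrightarrow>
     q \<in> poss (replace_at t p s) \<and> replace_at t p s |_ q = t |_ q \<and>
     replace_at (replace_at t p s) q u = replace_at (replace_at t q u) p s"
proof (induction t arbitrary: p q)
  case (Var x)
  then show ?case by (cases p; cases q) (auto simp: par_Nil)
next
  case (Fun f ts)
  then obtain i p' j q' where pq: "p = i # p'" "q = j # q'"
    by (cases p; cases q) (auto simp: par_Nil)
  show ?case
  proof (cases "i = j")
    case True
    with Fun pq have "par p' q'" "p' \<in> poss (ts ! i)" "q' \<in> poss (ts ! i)" "i < length ts"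
      by (auto simp: par_Cons)
    with Fun.IH[of "ts ! i" p' q'] True pq show ?thesis by auto
  next
    case False
    with Fun pq show ?thesis by (auto simp: list_update_swap)
  qed
qed

lemma subst_poss: "p \<in> poss t \<Longrightarrow> p \<in> poss (t \<cdot> \<sigma>)"
proof (induction t arbitrary: p)
  case (Var x) then show ?case by simp
next
  case (Fun f ts) then show ?case by (cases p) auto
qed

lemma subst_subt_at: "p \<in> poss t \<Longrightarrow> (t \<cdot> \<sigma>) |_ p = (t |_ p) \<cdot> \<sigma>"
proof (induction t arbitrary: p)
  case (Var x) then show ?case by simp
next
  case (Fun f ts) then show ?case by (cases p) auto
qed

lemma subst_replace_at: "p \<in> poss t \<Longrightarrow> replace_at t p s \<cdot> \<sigma> = replace_at (t \<cdot> \<sigma>) p (s \<cdot> \<sigma>)"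
proof (induction t arbitrary: p)
  case (Var x) then show ?case by simp
next
  case (Fun f ts) then show ?case by (cases p) (auto simp: map_update)
qed

lemma fun_poss_poss: "p \<in> fun_poss t \<Longrightarrow> p \<in> poss t"
  by (simp add: fun_poss_def)

lemma poss_subst_cases:
  assumes "p \<in> poss (t \<cdot> \<sigma>)" "p \<notin> fun_poss t"
  shows "\<exists>p1 p2 x. p = p1 @ p2 \<and> p1 \<in> poss t \<and> t |_ p1 = Var x \<and> p2 \<in> poss (\<sigma> x)"
  using assms
proof (induction t arbitrary: p)
  case (Var x) then show ?case by auto
next
  case (Fun f ts)
  show ?case
  proof (cases p)
    case Nil then show ?thesis using Fun by (auto simp: fun_poss_def)
  next
    case (Cons i p')
    with Fun.prems have i: "i < length ts" "p' \<in> poss (ts ! i \<cdot> \<sigma>)" by auto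
    have "p' \<notin> fun_poss (ts ! i)" using Fun.prems Cons i by (auto simp: fun_poss_def)
    with Fun.IH[of "ts ! i" p'] i obtain p1 p2 x where
      "p' = p1 @ p2" "p1 \<in> poss (ts ! i)" "ts ! i |_ p1 = Var x" "p2 \<in> poss (\<sigma> x)" by auto
    then show ?thesis using Cons i by (intro exI[of _ "i # p1"] exI[of _ p2] exI[of _ x]) auto
  qed
qed

lemma size_subt_less: "q \<in> poss t \<Longrightarrow> q \<noteq> [] \<Longrightarrow> size (t |_ q) < size t"
proof (induction t arbitrary: q)
  case (Var x) then show ?case by (cases q) auto
next
  case (Fun f ts)
  then obtain i q' where q: "q = i # q'" "i < length ts" "q' \<in> poss (ts ! i)" by (cases q) auto
  have "size (ts ! i) < size (Fun f ts)" using q(2)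
    by (simp add: size_list_estimation'[OF nth_mem[OF q(2)]] less_Suc_eq_le)
  moreover have "size (ts ! i |_ q') \<le> size (ts ! i)"
    using Fun.IH[of "ts ! i" q'] q by (cases "q' = []") auto
  ultimately show ?case using q by simp
qed




definition rsa :: "('f, 'v) rule set \<Rightarrow> pos \<Rightarrow> (('f, 'v) term \<times> ('f, 'v) term) set" where
  "rsa E p = {(s, t). \<exists>l r \<sigma>. (l, r) \<in> E \<and> p \<in> poss s \<and> s |_ p = l \<cdot> \<sigma> \<and> t = replace_at s p (r \<cdot> \<sigma>)}"

lemma rstep_rsa: "(s, t) \<in> rstep E \<longleftrightarrow> (\<exists>p. (s, t) \<in> rsa E p)"
  unfolding rstep_def rsa_def by blast

lemma rsa_poss: "(s, t) \<in> rsa E p \<Longrightarrow> p \<in> poss s"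
  unfolding rsa_def by blast

lemma rstep_union: "rstep (E \<union> F) = rstep E \<union> rstep F"
  unfolding rstep_def by blast

lemma rstep_mono: "E \<subseteq> F \<Longrightarrow> rstep E \<subseteq> rstep F"
  unfolding rstep_def by blast

definition swapE :: "('f, 'v) rule set \<Rightarrow> ('f, 'v) rule set" where
  "swapE E = {(t, s) | s t. (s, t) \<in> E}"

lemma rsa_swap: "(s, t) \<in> rsa (swapE E) p \<longleftrightarrow> (t, s) \<in> rsa E p"
proof
  assume "(s, t) \<in> rsa (swapE E) p"
  then obtain l r \<sigma> where "(r, l) \<in> E" "p \<in> poss s" "s |_ p = l \<cdot> \<sigma>" "t = replace_at s p (r \<cdot> \<sigma>)"
    unfolding rsa_def swapE_def by blast
  then have "p \<in> poss t" "t |_ p = r \<cdot> \<sigma>" "s = replace_at t p (l \<cdot> \<sigma>)"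
    by (metis replace_at_id replace_at_replace_at replace_at_subt replace_at_poss)+
  then show "(t, s) \<in> rsa E p" unfolding rsa_def using \<open>(r, l) \<in> E\<close> by blast
next
  assume "(t, s) \<in> rsa E p"
  then obtain l r \<sigma> where "(l, r) \<in> E" "p \<in> poss t" "t |_ p = l \<cdot> \<sigma>" "s = replace_at t p (r \<cdot> \<sigma>)"
    unfolding rsa_def by blast
  then have "p \<in> poss s" "s |_ p = r \<cdot> \<sigma>" "t = replace_at s p (l \<cdot> \<sigma>)"
    by (metis replace_at_id replace_at_replace_at replace_at_subt replace_at_poss)+
  moreover have "(r, l) \<in> swapE E" using \<open>(l, r) \<in> E\<close> unfolding swapE_def by blast
  ultimately show "(s, t) \<in> rsa (swapE E) p" unfolding rsa_def by blast
qed

lemma Bpm_swap: "Bpm B = B \<union> swapE B"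
  unfolding Bpm_def swapE_def by auto

lemma rstep_Bpm: "rstep (Bpm B) = rstep B \<union> (rstep B)\<inverse>"
  unfolding Bpm_swap rstep_union using rsa_swap[of _ _ B] by (auto simp: rstep_rsa)

lemma rsa_ctxt:
  assumes "(s, t) \<in> rsa E p" "q \<in> poss C"
  shows "(replace_at C q s, replace_at C q t) \<in> rsa E (q @ p)"
proof -
  from assms(1) obtain l r \<sigma> where st: "(l, r) \<in> E" "p \<in> poss s" "s |_ p = l \<cdot> \<sigma>" "t = replace_at s p (r \<cdot> \<sigma>)"
    unfolding rsa_def by blast
  let ?C = "replace_at C q s"
  have q: "q \<in> poss ?C" "?C |_ q = s" using assms(2) by auto
  have "q @ p \<in> poss ?C" using q st by (simp add: poss_append)
  moreover have "?C |_ (q @ p) = l \<cdot> \<sigma>" using q st by (simp add: subt_at_append)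
  moreover have "replace_at C q t = replace_at ?C (q @ p) (r \<cdot> \<sigma>)"
    using q st assms(2) by (simp add: replace_at_append)
  ultimately show ?thesis using st(1) unfolding rsa_def by blast
qed

lemma rstep_ctxt: "(s, t) \<in> rstep E \<Longrightarrow> q \<in> poss C \<Longrightarrow> (replace_at C q s, replace_at C q t) \<in> rstep E"
  using rsa_ctxt by (metis rstep_rsa)

lemma rsa_subst:
  assumes "(s, t) \<in> rsa E p"
  shows "(s \<cdot> \<tau>, t \<cdot> \<tau>) \<in> rsa E p"
proof -
  from assms obtain l r \<sigma> where st: "(l, r) \<in> E" "p \<in> poss s" "s |_ p = l \<cdot> \<sigma>" "t = replace_at s p (r \<cdot> \<sigma>)"
    unfolding rsa_def by blast
  have "p \<in> poss (s \<cdot> \<tau>)" using st by (simp add: subst_poss)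
  moreover have "(s \<cdot> \<tau>) |_ p = l \<cdot> (\<lambda>x. \<sigma> x \<cdot> \<tau>)" using st by (simp add: subst_subt_at subst_comp)
  moreover have "t \<cdot> \<tau> = replace_at (s \<cdot> \<tau>) p (r \<cdot> (\<lambda>x. \<sigma> x \<cdot> \<tau>))"
    using st by (simp add: subst_replace_at subst_comp)
  ultimately show ?thesis using st(1) unfolding rsa_def by blast
qed

lemma rstep_subst: "(s, t) \<in> rstep E \<Longrightarrow> (s \<cdot> \<tau>, t \<cdot> \<tau>) \<in> rstep E"
  using rsa_subst by (metis rstep_rsa)

definition ctxt_closed :: "(('f, 'v) term \<times> ('f, 'v) term) set \<Rightarrow> bool" where
  "ctxt_closed S \<longleftrightarrow> (\<forall>s t (C :: ('f, 'v) term) q. (s, t) \<in> S \<longrightarrow> q \<in> poss C \<longrightarrow> (replace_at C q s, replace_at C q t) \<in> S)"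

definition subst_closed :: "(('f, 'v) term \<times> ('f, 'v) term) set \<Rightarrow> bool" where
  "subst_closed S \<longleftrightarrow> (\<forall>s t (\<tau> :: ('f, 'v) subst). (s, t) \<in> S \<longrightarrow> (s \<cdot> \<tau>, t \<cdot> \<tau>) \<in> S)"

lemma ctxt_closed_rstep: "ctxt_closed (rstep E)"
  unfolding ctxt_closed_def using rstep_ctxt by blast

lemma subst_closed_rstep: "subst_closed (rstep E)"
  unfolding subst_closed_def using rstep_subst by blast

lemma ctxt_closed_Un: "ctxt_closed S \<Longrightarrow> ctxt_closed T \<Longrightarrow> ctxt_closed (S \<union> T)"
  unfolding ctxt_closed_def by blast

lemma ctxt_closed_conv: "ctxt_closed S \<Longrightarrow> ctxt_closed (S\<inverse>)"
  unfolding ctxt_closed_def by blast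

lemma ctxt_closed_rtrancl: "ctxt_closed (S :: (('f, 'v) term \<times> ('f, 'v) term) set) \<Longrightarrow> ctxt_closed (S\<^sup>*)"
  unfolding ctxt_closed_def
proof (intro allI impI)
  fix s t q and C :: "('f, 'v) term"
  assume S: "\<forall>s t C q. (s, t) \<in> S \<longrightarrow> q \<in> poss C \<longrightarrow> (replace_at C q s, replace_at C q t) \<in> S"
    and st: "(s, t) \<in> S\<^sup>*" and q: "q \<in> poss C"
  from st show "(replace_at C q s, replace_at C q t) \<in> S\<^sup>*"
  proof induction
    case base then show ?case by simp
  next
    case (step y z)
    then show ?case using S q by (meson rtrancl.rtrancl_into_rtrancl)
  qed
qed

lemma subst_closed_Un: "subst_closed S \<Longrightarrow> subst_closed T \<Longrightarrow> subst_closed (S \<union> T)"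
  unfolding subst_closed_def by blast

lemma subst_closed_conv: "subst_closed S \<Longrightarrow> subst_closed (S\<inverse>)"
  unfolding subst_closed_def by blast

lemma subst_closed_rtrancl: "subst_closed (S :: (('f, 'v) term \<times> ('f, 'v) term) set) \<Longrightarrow> subst_closed (S\<^sup>*)"
  unfolding subst_closed_def
proof (intro allI impI)
  fix s t and \<tau> :: "('f, 'v) subst"
  assume S: "\<forall>s t \<tau>. (s, t) \<in> S \<longrightarrow> (s \<cdot> \<tau>, t \<cdot> \<tau>) \<in> S" and st: "(s, t) \<in> S\<^sup>*"
  from st show "(s \<cdot> \<tau>, t \<cdot> \<tau>) \<in> S\<^sup>*"
  proof induction
    case base then show ?case by simp
  next
    case (step y z)
    then show ?case using S by (meson rtrancl.rtrancl_into_rtrancl)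
  qed
qed

lemma conv_def2: "conv E = (rstep E \<union> (rstep E)\<inverse>)\<^sup>*" by (simp add: conv_def)

lemma ctxt_closed_conv_rel: "ctxt_closed (conv E)"
  unfolding conv_def by (intro ctxt_closed_rtrancl ctxt_closed_Un ctxt_closed_conv ctxt_closed_rstep)

lemma subst_closed_conv_rel: "subst_closed (conv E)"
  unfolding conv_def by (intro subst_closed_rtrancl subst_closed_Un subst_closed_conv subst_closed_rstep)

lemma ctxt_closed_rsteps: "ctxt_closed ((rstep E)\<^sup>*)"
  by (intro ctxt_closed_rtrancl ctxt_closed_rstep)

lemma subst_closed_rsteps: "subst_closed ((rstep E)\<^sup>*)"
  by (intro subst_closed_rtrancl subst_closed_rstep)

lemma conv_refl[simp]: "(s, s) \<in> conv E"
  unfolding conv_def by simp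

lemma conv_sym: "(s, t) \<in> conv E \<Longrightarrow> (t, s) \<in> conv E"
  unfolding conv_def
  by (metis converse_Un converse_converse rtrancl_converseI sup_commute)

lemma conv_trans: "(s, t) \<in> conv E \<Longrightarrow> (t, u) \<in> conv E \<Longrightarrow> (s, u) \<in> conv E"
  unfolding conv_def by (rule rtrancl_trans)

lemma conv_step: "(s, t) \<in> rstep E \<Longrightarrow> (s, t) \<in> conv E"
  unfolding conv_def by auto

lemma conv_step_inv: "(t, s) \<in> rstep E \<Longrightarrow> (s, t) \<in> conv E"
  unfolding conv_def by auto

lemma conv_Bpm: "(s, t) \<in> rstep (Bpm B) \<Longrightarrow> (s, t) \<in> conv B"
  unfolding rstep_Bpm using conv_step conv_step_inv by blast

lemma rsteps_conv: "(s, t) \<in> (rstep E)\<^sup>* \<Longrightarrow> (s, t) \<in> conv E"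
  unfolding conv_def by (meson in_rtrancl_UnI)

lemma arg_step:
  assumes "ctxt_closed S" "(a, b) \<in> S"
  shows "(Fun f (xs @ a # ys), Fun f (xs @ b # ys)) \<in> S"
proof -
  let ?C = "Fun f (xs @ a # ys)"
  have p: "[length xs] \<in> poss ?C" by simp
  have "replace_at ?C [length xs] a = ?C" by simp
  moreover have "replace_at ?C [length xs] b = Fun f (xs @ b # ys)" by simp
  ultimately show ?thesis using assms p unfolding ctxt_closed_def by metis
qed

lemma args_steps:
  assumes "ctxt_closed S"
  shows "length ts = length us \<Longrightarrow> (\<forall>i<length ts. (ts ! i, us ! i) \<in> S\<^sup>*) \<Longrightarrow>
    (Fun f (xs @ ts), Fun f (xs @ us)) \<in> S\<^sup>*"
proof (induction ts arbitrary: us xs)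
  case Nil then show ?case by simp
next
  case (Cons a ts)
  then obtain b us' where us: "us = b # us'" by (cases us) auto
  from Cons.prems us have ab: "(a, b) \<in> S\<^sup>*" by force
  have "(Fun f (xs @ a # ts), Fun f (xs @ b # ts)) \<in> S\<^sup>*"
    using ab
  proof induction
    case base then show ?case by simp
  next
    case (step y z)
    then show ?case using arg_step[OF assms] by (meson rtrancl.rtrancl_into_rtrancl)
  qed
  moreover have "(Fun f ((xs @ [b]) @ ts), Fun f ((xs @ [b]) @ us')) \<in> S\<^sup>*"
    using Cons.IH[of us' "xs @ [b]"] Cons.prems us by force
  ultimately show ?case using us by (simp add: rtrancl_trans)
qed

lemma subst_steps:
  assumes "ctxt_closed S" "\<And>x. x \<in> vars_term t \<Longrightarrow> (\<sigma> x, \<tau> x) \<in> S\<^sup>*"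
  shows "(t \<cdot> \<sigma>, t \<cdot> \<tau>) \<in> S\<^sup>*"
  using assms(2)
proof (induction t)
  case (Var x) then show ?case by simp
next
  case (Fun f ts)
  have "(Fun f ([] @ map (\<lambda>t. t \<cdot> \<sigma>) ts), Fun f ([] @ map (\<lambda>t. t \<cdot> \<tau>) ts)) \<in> S\<^sup>*"
  proof (rule args_steps[OF assms(1)])
    show "\<forall>i<length (map (\<lambda>t. t \<cdot> \<sigma>) ts). (map (\<lambda>t. t \<cdot> \<sigma>) ts ! i, map (\<lambda>t. t \<cdot> \<tau>) ts ! i) \<in> S\<^sup>*"
    proof (intro allI impI)
      fix i assume i: "i < length (map (\<lambda>t. t \<cdot> \<sigma>) ts)"
      then have m: "ts ! i \<in> set ts" by simp
      have "(ts ! i \<cdot> \<sigma>, ts ! i \<cdot> \<tau>) \<in> S\<^sup>*"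
        by (rule Fun.IH[OF m]) (use Fun.prems m in auto)
      then show "(map (\<lambda>t. t \<cdot> \<sigma>) ts ! i, map (\<lambda>t. t \<cdot> \<tau>) ts ! i) \<in> S\<^sup>*" using i by simp
    qed
  qed simp
  then show ?case by simp
qed




section \<open>Unification\<close>

definition unifiesE :: "('f, 'v) subst \<Rightarrow> (('f, 'v) term \<times> ('f, 'v) term) list \<Rightarrow> bool" where
  "unifiesE \<tau> E \<longleftrightarrow> (\<forall>(a, b) \<in> set E. a \<cdot> \<tau> = b \<cdot> \<tau>)"

definition varsE :: "(('f, 'v) term \<times> ('f, 'v) term) list \<Rightarrow> 'v set" where
  "varsE E = (\<Union>(a, b) \<in> set E. vars_term a \<union> vars_term b)"

definition sizeE :: "(('f, 'v) term \<times> ('f, 'v) term) list \<Rightarrow> nat" where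
  "sizeE E = (\<Sum>(a, b) \<leftarrow> E. size a + size b)"

definition mguE :: "('f, 'v) subst \<Rightarrow> (('f, 'v) term \<times> ('f, 'v) term) list \<Rightarrow> bool" where
  "mguE \<mu> E \<longleftrightarrow> unifiesE \<mu> E \<and> (\<forall>\<tau>. unifiesE \<tau> E \<longrightarrow> (\<exists>\<delta>. \<forall>x. \<tau> x = \<mu> x \<cdot> \<delta>))"

lemma finite_varsE: "finite (varsE E)"
  unfolding varsE_def by auto

lemma subst_comp_eq: "(\<forall>x. \<tau> x = \<mu> x \<cdot> \<delta>) \<Longrightarrow> t \<cdot> \<tau> = t \<cdot> \<mu> \<cdot> \<delta>"
  by (simp add: subst_comp) (metis ext)

lemma elim_step:
  fixes x :: 'v and b :: "('f, 'v) term"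
  defines "\<sigma>x \<equiv> Var(x := b)"
  assumes nx: "x \<notin> vars_term b"
    and mgu': "mguE \<mu>' (map (\<lambda>(s, t). (s \<cdot> \<sigma>x, t \<cdot> \<sigma>x)) E)"
  shows "mguE (\<lambda>y. \<sigma>x y \<cdot> \<mu>') ((Var x, b) # E)"
proof -
  let ?E' = "map (\<lambda>(s, t). (s \<cdot> \<sigma>x, t \<cdot> \<sigma>x)) E"
  let ?\<mu> = "\<lambda>y. \<sigma>x y \<cdot> \<mu>'"
  have "b \<cdot> \<sigma>x = b \<cdot> Var" by (rule subst_agree) (use nx in \<open>auto simp: \<sigma>x_def\<close>)
  then have bsx: "b \<cdot> \<sigma>x = b" by simp
  have key: "\<And>\<tau> t. \<tau> x = b \<cdot> \<tau> \<Longrightarrow> t \<cdot> \<sigma>x \<cdot> \<tau> = t \<cdot> \<tau>"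
    by (simp add: subst_comp) (rule subst_agree, auto simp: \<sigma>x_def)
  have u': "unifiesE \<mu>' ?E'" using mgu' unfolding mguE_def by blast
  have "unifiesE ?\<mu> ((Var x, b) # E)"
    unfolding unifiesE_def
  proof (intro ballI, clarify)
    fix s t assume "(s, t) \<in> set ((Var x, b) # E)"
    then consider "s = Var x" "t = b" | "(s, t) \<in> set E" by auto
    then show "s \<cdot> ?\<mu> = t \<cdot> ?\<mu>"
    proof cases
      case 1
      have "b \<cdot> ?\<mu> = b \<cdot> \<sigma>x \<cdot> \<mu>'" by (simp add: subst_comp)
      then show ?thesis using 1 bsx by (simp add: \<sigma>x_def)
    next
      case 2
      then have "s \<cdot> \<sigma>x \<cdot> \<mu>' = t \<cdot> \<sigma>x \<cdot> \<mu>'" using u' unfolding unifiesE_def by fastforce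
      then show ?thesis by (simp add: subst_comp)
    qed
  qed
  moreover have "\<exists>\<delta>. \<forall>y. \<tau> y = ?\<mu> y \<cdot> \<delta>" if \<tau>: "unifiesE \<tau> ((Var x, b) # E)" for \<tau>
  proof -
    have tx: "\<tau> x = b \<cdot> \<tau>" using \<tau> unfolding unifiesE_def by auto
    have "unifiesE \<tau> ?E'" unfolding unifiesE_def
    proof (clarsimp)
      fix s t assume "(s, t) \<in> set E"
      then have "s \<cdot> \<tau> = t \<cdot> \<tau>" using \<tau> unfolding unifiesE_def by auto
      then show "s \<cdot> \<sigma>x \<cdot> \<tau> = t \<cdot> \<sigma>x \<cdot> \<tau>" using key[OF tx] by simp
    qed
    then obtain \<delta> where d: "\<forall>y. \<tau> y = \<mu>' y \<cdot> \<delta>" using mgu' unfolding mguE_def by blast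
    have "\<tau> y = ?\<mu> y \<cdot> \<delta>" for y
    proof -
      have "?\<mu> y \<cdot> \<delta> = \<sigma>x y \<cdot> \<tau>" using subst_comp_eq[OF d, of "\<sigma>x y"] by simp
      also have "\<dots> = \<tau> y" using tx by (simp add: \<sigma>x_def)
      finally show ?thesis by simp
    qed
    then show ?thesis by blast
  qed
  ultimately show ?thesis unfolding mguE_def by blast
qed

lemma mguE_swap_head: "mguE \<mu> ((a, b) # E) \<Longrightarrow> mguE \<mu> ((b, a) # E)"
  unfolding mguE_def unifiesE_def by (auto; metis)

lemma mgu_exists_aux:
  fixes E :: "(('f, 'v) term \<times> ('f, 'v) term) list"
  shows "card (varsE E) = n \<Longrightarrow> sizeE E = m \<Longrightarrow> unifiesE \<tau> E \<Longrightarrow> \<exists>\<mu>. mguE \<mu> E"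
proof (induction n arbitrary: m E \<tau> rule: less_induct)
  case (less n)
  note outer = less.IH
  from less.prems show ?case
  proof (induction m arbitrary: E \<tau> rule: less_induct)
    case (less m)
    note inner = less.IH
    show ?case
    proof (cases E)
      case Nil
      then show ?thesis by (intro exI[of _ Var]) (auto simp: mguE_def unifiesE_def)
    next
      case (Cons pr E0)
      obtain a b where pr: "pr = (a, b)" by (cases pr)
      have elim: "\<exists>\<mu>. mguE \<mu> ((Var x, t) # E0)"
        if xt: "t \<noteq> Var x" and u: "unifiesE \<tau> ((Var x, t) # E0)"
          and vars: "varsE ((Var x, t) # E0) = varsE E" for x t
      proof -
        have tx: "\<tau> x = t \<cdot> \<tau>" using u unfolding unifiesE_def by auto
        have nx: "x \<notin> vars_term t"
        proof
          assume "x \<in> vars_term t"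
          then have "size (\<tau> x) < size (t \<cdot> \<tau>)" using xt by (rule size_subst_less)
          then show False using tx by simp
        qed
        define \<sigma>x where "\<sigma>x = (Var(x := t) :: ('f, 'v) subst)"
        let ?E' = "map (\<lambda>(s, t). (s \<cdot> \<sigma>x, t \<cdot> \<sigma>x)) E0"
        have key: "s \<cdot> \<sigma>x \<cdot> \<tau> = s \<cdot> \<tau>" for s
          by (simp add: subst_comp) (rule subst_agree, auto simp: \<sigma>x_def tx)
        have uE': "unifiesE \<tau> ?E'" using u key unfolding unifiesE_def by auto
        have sub: "varsE ?E' \<subseteq> varsE ((Var x, t) # E0) - {x}"
        proof
          fix y assume "y \<in> varsE ?E'"
          then obtain s1 s2 where s: "(s1, s2) \<in> set E0" "y \<in> vars_term (s1 \<cdot> \<sigma>x) \<union> vars_term (s2 \<cdot> \<sigma>x)"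
            unfolding varsE_def by auto
          then obtain z where z: "z \<in> vars_term s1 \<union> vars_term s2" "y \<in> vars_term (\<sigma>x z)"
            by (auto simp: vars_subst)
          show "y \<in> varsE ((Var x, t) # E0) - {x}"
          proof (cases "z = x")
            case True then show ?thesis using z nx s unfolding varsE_def by (auto simp: \<sigma>x_def)
          next
            case False then show ?thesis using z s unfolding varsE_def by (auto simp: \<sigma>x_def)
          qed
        qed
        have "x \<in> varsE ((Var x, t) # E0)" unfolding varsE_def by auto
        then have "varsE ?E' \<subset> varsE ((Var x, t) # E0)" using sub by blast
        then have "card (varsE ?E') < card (varsE ((Var x, t) # E0))"
          by (rule psubset_card_mono[OF finite_varsE])
        then have "card (varsE ?E') < n" using vars less.prems by simp
        then obtain \<mu>' where "mguE \<mu>' ?E'" using outer uE' by blast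
        then show ?thesis using elim_step[OF nx] unfolding \<sigma>x_def by blast
      qed
      show ?thesis
      proof (cases a)
        case (Var x)
        show ?thesis
        proof (cases "b = Var x")
          case True
          have "unifiesE \<tau> E0" using less.prems Cons unfolding unifiesE_def by auto
          then obtain \<mu> where mu: "mguE \<mu> E0"
          proof (cases "card (varsE E0) < n")
            case True then show ?thesis using outer that \<open>unifiesE \<tau> E0\<close> by blast
          next
            case False
            have "varsE E0 \<subseteq> varsE E" using Cons unfolding varsE_def by auto
            then have "card (varsE E0) = n" using False less.prems card_mono[OF finite_varsE] by fastforce
            moreover have "sizeE E0 < m" using less.prems Cons pr Var True by (simp add: sizeE_def)
            ultimately show ?thesis using inner that \<open>unifiesE \<tau> E0\<close> by blast
          qed
          then have "mguE \<mu> E" using Cons pr Var True unfolding mguE_def unifiesE_def by auto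
          then show ?thesis by blast
        next
          case False
          then show ?thesis using elim[of b x] less.prems Cons pr Var by auto
        qed
      next
        case (Fun f as)
        show ?thesis
        proof (cases b)
          case (Var y)
          have "\<exists>\<mu>. mguE \<mu> ((Var y, a) # E0)"
            by (rule elim) (use less.prems Cons pr Var Fun in \<open>auto simp: unifiesE_def varsE_def\<close>)
          then show ?thesis using mguE_swap_head Cons pr Var by blast
        next
          case (Fun g bs)
          from less.prems Cons pr \<open>a = Fun f as\<close> Fun
          have fg: "f = g" and len: "length as = length bs"
            and "map (\<lambda>t. t \<cdot> \<tau>) as = map (\<lambda>t. t \<cdot> \<tau>) bs"
            unfolding unifiesE_def by (auto dest: map_eq_imp_length_eq)
          let ?E' = "zip as bs @ E0"
          have uz: "unifiesE \<sigma> ?E' \<longleftrightarrow> unifiesE \<sigma> E" for \<sigma>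
          proof -
            have "(\<forall>(c, d) \<in> set (zip as bs). c \<cdot> \<sigma> = d \<cdot> \<sigma>) \<longleftrightarrow> map (\<lambda>t. t \<cdot> \<sigma>) as = map (\<lambda>t. t \<cdot> \<sigma>) bs"
              using len by (auto simp: list_eq_iff_nth_eq set_zip)
            then show ?thesis using Cons pr \<open>a = Fun f as\<close> Fun fg unfolding unifiesE_def by auto
          qed
          have ve: "varsE ?E' = varsE E"
          proof -
            have "(\<Union>(c, d) \<in> set (zip as bs). vars_term c \<union> vars_term d) = (\<Union>c \<in> set as. vars_term c) \<union> (\<Union>d \<in> set bs. vars_term d)"
            proof (intro equalityI subsetI)
              fix y assume "y \<in> (\<Union>(c, d) \<in> set (zip as bs). vars_term c \<union> vars_term d)"
              then show "y \<in> (\<Union>c \<in> set as. vars_term c) \<union> (\<Union>d \<in> set bs. vars_term d)"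
                by (blast dest: set_zip_leftD set_zip_rightD)
            next
              fix y assume "y \<in> (\<Union>c \<in> set as. vars_term c) \<union> (\<Union>d \<in> set bs. vars_term d)"
              then obtain i where i: "i < length as" "y \<in> vars_term (as ! i) \<union> vars_term (bs ! i)"
                using len by (auto simp: in_set_conv_nth)
              then have "(as ! i, bs ! i) \<in> set (zip as bs)" using len
                by (metis in_set_conv_nth length_zip min.idem nth_zip)
              then show "y \<in> (\<Union>(c, d) \<in> set (zip as bs). vars_term c \<union> vars_term d)" using i by blast
            qed
            then show ?thesis using Cons pr \<open>a = Fun f as\<close> Fun unfolding varsE_def by auto
          qed
          have "sizeE (zip as bs) < size a + size b"
          proof -
            have "sizeE (zip as bs) = (\<Sum>(c, d) \<leftarrow> zip as bs. size c + size d)" by (simp add: sizeE_def)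
            also have "\<dots> = sum_list (map size as) + sum_list (map size bs)"
              using len by (induction as bs rule: list_induct2) auto
            also have "\<dots> < size a + size b" using \<open>a = Fun f as\<close> Fun
              by (simp add: size_list_conv_sum_list)
            finally show ?thesis .
          qed
          then have "sizeE ?E' < m" using less.prems Cons pr by (simp add: sizeE_def)
          then obtain \<mu> where "mguE \<mu> ?E'" using inner[of "sizeE ?E'" ?E' \<tau>] ve uz less.prems by auto
          then have "mguE \<mu> E" using uz unfolding mguE_def by simp
          then show ?thesis by blast
        qed
      qed
    qed
  qed
qed

lemma mgu_exists: "s \<cdot> \<tau> = t \<cdot> \<tau> \<Longrightarrow> \<exists>\<mu>. is_mgu \<mu> s t"
proof -
  assume "s \<cdot> \<tau> = t \<cdot> \<tau>"
  then have "unifiesE \<tau> [(s, t)]" by (simp add: unifiesE_def)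
  then obtain \<mu> where "mguE \<mu> [(s, t)]" using mgu_exists_aux by blast
  then show ?thesis unfolding mguE_def unifiesE_def is_mgu_def by auto
qed




lemma vars_rename: "vars_term (t \<cdot> (Var \<circ> \<pi>)) = \<pi> ` vars_term t"
  by (simp add: vars_subst) blast

lemma rename_apart:
  assumes inf: "infinite (UNIV :: 'v set)" and fin: "finite (V :: 'v set)" "finite (W :: 'v set)"
  shows "\<exists>\<pi>. bij \<pi> \<and> \<pi> ` V \<inter> W = {}"
proof -
  have "infinite (UNIV - (V \<union> W))" using inf fin by (simp add: Diff_infinite_finite)
  then obtain F where F: "finite F" "card F = card V" "F \<subseteq> UNIV - (V \<union> W)"
    using infinite_arbitrarily_large by blast
  obtain g where g: "bij_betw g V F" using finite_same_card_bij[OF fin(1) F(1) F(2)[symmetric]] by blast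
  define \<pi> where "\<pi> x = (if x \<in> V then g x else if x \<in> F then inv_into V g x else x)" for x
  have gF: "x \<in> V \<Longrightarrow> g x \<in> F" for x using g by (auto simp: bij_betw_def)
  have iV: "x \<in> F \<Longrightarrow> inv_into V g x \<in> V" for x using g by (metis bij_betw_def inv_into_into)
  have VF: "V \<inter> F = {}" using F by auto
  have inv: "\<pi> (\<pi> x) = x" for x
  proof -
    consider "x \<in> V" | "x \<in> F" | "x \<notin> V" "x \<notin> F" by blast
    then show ?thesis
    proof cases
      case 1 then have "g x \<in> F" "g x \<notin> V" using gF VF by auto
      then show ?thesis using 1 g unfolding \<pi>_def by (simp add: bij_betw_inv_into_left)
    next
      case 2 then have "inv_into V g x \<in> V" using iV by auto
      then show ?thesis using 2 g VF unfolding \<pi>_def by (auto simp: bij_betw_inv_into_right)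
    next
      case 3 then show ?thesis unfolding \<pi>_def by simp
    qed
  qed
  then have "bij \<pi>" by (intro o_bij[of \<pi> \<pi>]) (auto simp: fun_eq_iff)
  moreover have "\<pi> ` V \<inter> W = {}" using gF F unfolding \<pi>_def by auto
  ultimately show ?thesis by blast
qed

lemma rename_id: "rename_rule id \<rho> = \<rho>"
  unfolding rename_rule_def by (cases \<rho>) (simp add: comp_def)

lemma variant_refl: "variant_of \<rho> \<rho>"
  unfolding variant_of_def using rename_id bij_id by metis

lemma variant_step:
  assumes "variant_of (l1, r1) (l, r)"
  shows "\<exists>\<tau>. l1 \<cdot> \<mu> = l \<cdot> \<tau> \<and> r1 \<cdot> \<mu> = r \<cdot> \<tau>"
proof -
  from assms obtain \<pi> where "l1 = l \<cdot> (Var \<circ> \<pi>)" "r1 = r \<cdot> (Var \<circ> \<pi>)"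
    unfolding variant_of_def rename_rule_def by auto
  then show ?thesis by (intro exI[of _ "\<lambda>x. \<mu> (\<pi> x)"]) (simp add: subst_comp)
qed

lemma cp_instance:
  fixes R R1 R2 :: "('f, 'v) rule set"
  assumes inf: "infinite (UNIV :: 'v set)"
    and a: "(la, ra) \<in> R1" and b: "(lb, rb) \<in> R2"
    and vrb: "vars_term rb \<subseteq> vars_term lb"
    and pp: "pp \<in> fun_poss lb"
    and eq: "(lb \<cdot> \<sigma>b) |_ pp = la \<cdot> \<sigma>a"
    and prime: "\<forall>q \<in> poss (la \<cdot> \<sigma>a). q \<noteq> [] \<longrightarrow> NF R ((la \<cdot> \<sigma>a) |_ q)"
  shows "replace_at (lb \<cdot> \<sigma>b) pp (ra \<cdot> \<sigma>a) = rb \<cdot> \<sigma>b \<or>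
    (\<exists>c d \<delta>. (c, d) \<in> pcp_gen R1 R2 R \<and> replace_at (lb \<cdot> \<sigma>b) pp (ra \<cdot> \<sigma>a) = c \<cdot> \<delta> \<and> rb \<cdot> \<sigma>b = d \<cdot> \<delta>)"
proof -
  let ?V = "vars_rule (la, ra)" and ?W = "vars_rule (lb, rb)"
  obtain \<pi> where \<pi>: "bij \<pi>" "\<pi> ` ?V \<inter> ?W = {}"
    using rename_apart[OF inf, of ?V ?W] by (auto simp: vars_rule_def)
  define \<rho>1 where "\<rho>1 = rename_rule \<pi> (la, ra)"
  define \<rho>2 where "\<rho>2 = (lb, rb)"
  have \<rho>1: "fst \<rho>1 = la \<cdot> (Var \<circ> \<pi>)" "snd \<rho>1 = ra \<cdot> (Var \<circ> \<pi>)"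
    unfolding \<rho>1_def rename_rule_def by auto
  have v1: "vars_rule \<rho>1 = \<pi> ` ?V" unfolding \<rho>1_def rename_rule_def vars_rule_def
    by (simp add: vars_rename image_Un)
  define \<theta> where "\<theta> y = (if y \<in> \<pi> ` ?V then \<sigma>a (inv \<pi> y) else \<sigma>b y)" for y
  have inj: "inj \<pi>" using \<pi> bij_is_inj by blast
  have t1: "la \<cdot> (Var \<circ> \<pi>) \<cdot> \<theta> = la \<cdot> \<sigma>a" "ra \<cdot> (Var \<circ> \<pi>) \<cdot> \<theta> = ra \<cdot> \<sigma>a"
    by (simp_all add: subst_comp, (rule subst_agree, auto simp: \<theta>_def vars_rule_def inv_f_f[OF inj])+)
  have t2: "lb \<cdot> \<theta> = lb \<cdot> \<sigma>b" "rb \<cdot> \<theta> = rb \<cdot> \<sigma>b"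
    by (rule subst_agree, use \<pi>(2) in \<open>auto simp: \<theta>_def vars_rule_def\<close>)+
  have op: "pp \<in> poss lb" using pp fun_poss_poss by blast
  have unif: "fst \<rho>1 \<cdot> \<theta> = (fst \<rho>2 |_ pp) \<cdot> \<theta>"
    using \<rho>1 t1 t2 eq op by (simp add: \<rho>2_def subst_subt_at[symmetric])
  then obtain \<mu> where mu: "is_mgu \<mu> (fst \<rho>1) (fst \<rho>2 |_ pp)" using mgu_exists by blast
  then obtain \<delta> where d: "\<forall>x. \<theta> x = \<mu> x \<cdot> \<delta>" using unif unfolding is_mgu_def by blast
  have th: "t \<cdot> \<theta> = t \<cdot> \<mu> \<cdot> \<delta>" for t using subst_comp_eq[OF d] .
  show ?thesis
  proof (cases "pp = [] \<and> variant_of \<rho>1 \<rho>2")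
    case True
    then obtain \<pi>' where "\<rho>1 = rename_rule \<pi>' \<rho>2" unfolding variant_of_def by blast
    then have r: "fst \<rho>1 = lb \<cdot> (Var \<circ> \<pi>')" "snd \<rho>1 = rb \<cdot> (Var \<circ> \<pi>')"
      unfolding rename_rule_def \<rho>2_def by auto
    have "lb \<cdot> (\<lambda>x. \<theta> (\<pi>' x)) = lb \<cdot> \<theta>" using unif r True by (simp add: \<rho>2_def subst_comp)
    then have "rb \<cdot> (\<lambda>x. \<theta> (\<pi>' x)) = rb \<cdot> \<theta>"
      using vrb subst_agree_rev subst_agree by (metis (no_types, lifting) subsetD)
    then have "ra \<cdot> \<sigma>a = rb \<cdot> \<sigma>b" using r t1 t2 \<rho>1 by (simp add: subst_comp)
    then show ?thesis using True by simp
  next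
    case False
    have ov: "overlap R1 R2 \<rho>1 pp \<rho>2" unfolding overlap_def
    proof (intro conjI)
      show "\<exists>\<rho>\<in>R1. variant_of \<rho>1 \<rho>" using a \<pi>(1) unfolding \<rho>1_def variant_of_def by blast
      show "\<exists>\<rho>\<in>R2. variant_of \<rho>2 \<rho>" using b variant_refl unfolding \<rho>2_def by blast
      show "vars_rule \<rho>1 \<inter> vars_rule \<rho>2 = {}" using v1 \<pi>(2) by (simp add: \<rho>2_def)
      show "pp \<in> fun_poss (fst \<rho>2)" using pp by (simp add: \<rho>2_def)
      show "unifiable (fst \<rho>1) (fst \<rho>2 |_ pp)" using unif unfolding unifiable_def by blast
      show "pp = [] \<longrightarrow> \<not> variant_of \<rho>1 \<rho>2" using False by blast
    qed
    have op2: "pp \<in> poss (fst \<rho>2 \<cdot> \<mu>)" using op by (simp add: \<rho>2_def subst_poss)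
    have sub: "(fst \<rho>2 \<cdot> \<mu>) |_ pp = fst \<rho>1 \<cdot> \<mu>"
      using mu op unfolding is_mgu_def by (simp add: \<rho>2_def subst_subt_at)
    have pr: "\<forall>q \<in> poss ((fst \<rho>2 \<cdot> \<mu>) |_ pp). q \<noteq> [] \<longrightarrow> NF R ((fst \<rho>2 \<cdot> \<mu>) |_ pp |_ q)"
    proof (intro ballI impI)
      fix q assume q: "q \<in> poss ((fst \<rho>2 \<cdot> \<mu>) |_ pp)" "q \<noteq> []"
      show "NF R ((fst \<rho>2 \<cdot> \<mu>) |_ pp |_ q)"
      proof (rule ccontr)
        assume "\<not> NF R ((fst \<rho>2 \<cdot> \<mu>) |_ pp |_ q)"
        then obtain v where v: "((fst \<rho>1 \<cdot> \<mu>) |_ q, v) \<in> rstep R" unfolding NF_def using sub by auto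
        have q1: "q \<in> poss (fst \<rho>1 \<cdot> \<mu>)" using q sub by simp
        have "((fst \<rho>1 \<cdot> \<mu>) |_ q \<cdot> \<delta>, v \<cdot> \<delta>) \<in> rstep R" using v rstep_subst by blast
        moreover have "(fst \<rho>1 \<cdot> \<mu>) |_ q \<cdot> \<delta> = (la \<cdot> \<sigma>a) |_ q"
          using q1 by (simp add: subst_subt_at[symmetric] th[symmetric] \<rho>1 t1)
        moreover have "q \<in> poss (la \<cdot> \<sigma>a)" using q1 subst_poss[OF q1, of \<delta>]
          by (simp add: th[symmetric] \<rho>1 t1)
        ultimately have "q \<in> poss (la \<cdot> \<sigma>a)" "\<not> NF R ((la \<cdot> \<sigma>a) |_ q)" unfolding NF_def by auto
        then show False using prime q(2) by blast
      qed
    qed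
    let ?c = "replace_at (fst \<rho>2 \<cdot> \<mu>) pp (snd \<rho>1 \<cdot> \<mu>)" and ?d = "snd \<rho>2 \<cdot> \<mu>"
    have "(?c, ?d) \<in> pcp_gen R1 R2 R"
      unfolding pcp_gen_def using ov mu pr by blast
    moreover have "replace_at (lb \<cdot> \<sigma>b) pp (ra \<cdot> \<sigma>a) = ?c \<cdot> \<delta>"
      using op2 by (simp add: subst_replace_at th[symmetric] \<rho>1 t1 t2 \<rho>2_def)
    moreover have "rb \<cdot> \<sigma>b = ?d \<cdot> \<delta>" by (simp add: th[symmetric] t2 \<rho>2_def)
    ultimately show ?thesis by blast
  qed
qed




lemma distinct_concat_nth: "distinct (concat xss) \<Longrightarrow> i < length xss \<Longrightarrow> distinct (xss ! i)"
  by (metis distinct_concat_iff nth_mem)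

lemma distinct_concat_disj:
  "distinct (concat xss) \<Longrightarrow> i < length xss \<Longrightarrow> j < length xss \<Longrightarrow> i \<noteq> j \<Longrightarrow> set (xss ! i) \<inter> set (xss ! j) = {}"
proof (induction xss arbitrary: i j)
  case Nil then show ?case by simp
next
  case (Cons xs xss)
  show ?case
  proof (cases i)
    case 0
    with Cons obtain j' where "j = Suc j'" "j' < length xss" by (cases j) auto
    moreover have "set (xss ! j') \<subseteq> set (concat xss)" using \<open>j' < length xss\<close> nth_mem by fastforce
    ultimately show ?thesis using Cons.prems 0 by auto
  next
    case (Suc i')
    show ?thesis
    proof (cases j)
      case 0
      have "i' < length xss" using Cons.prems Suc by simp
      then have "set (xss ! i') \<subseteq> set (concat xss)" using nth_mem by fastforce
      then show ?thesis using Cons.prems Suc 0 by auto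
    next
      case (Suc j')
      then show ?thesis using Cons \<open>i = Suc i'\<close> by auto
    qed
  qed
qed

lemma var_pos_in_vars: "p \<in> poss l \<Longrightarrow> l |_ p = Var x \<Longrightarrow> x \<in> vars_term l"
proof (induction l arbitrary: p)
  case (Var y) then show ?case by (cases p) auto
next
  case (Fun f ts)
  then obtain i p' where "p = i # p'" "i < length ts" "p' \<in> poss (ts ! i)"
    by (cases p) auto
  with Fun show ?case by (metis nth_mem subt_at.simps(3) vars_term.simps(2) UN_I)
qed

lemma linear_replace:
  assumes "linear_term l" "p \<in> poss l" "l |_ p = Var x"
  shows "replace_at (l \<cdot> \<sigma>) p u = l \<cdot> (\<sigma>(x := u))"
  using assms
proof (induction l arbitrary: p)
  case (Var y) then show ?case by (cases p) auto
next
  case (Fun f ts)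
  then obtain i p' where p: "p = i # p'" "i < length ts" "p' \<in> poss (ts ! i)"
    by (cases p) auto
  let ?xss = "map vars_term_list ts"
  have dist: "distinct (concat ?xss)" using Fun.prems unfolding linear_term_def by simp
  have li: "linear_term (ts ! i)" using distinct_concat_nth[OF dist, of i] p unfolding linear_term_def by simp
  have xi: "ts ! i |_ p' = Var x" using Fun.prems p by simp
  have xin: "x \<in> vars_term (ts ! i)" using var_pos_in_vars[OF p(3) xi] .
  have IH: "replace_at (ts ! i \<cdot> \<sigma>) p' u = ts ! i \<cdot> (\<sigma>(x := u))"
    using Fun.IH[OF nth_mem[OF p(2)] li p(3) xi] .
  have other: "ts ! j \<cdot> \<sigma> = ts ! j \<cdot> (\<sigma>(x := u))" if "j < length ts" "j \<noteq> i" for j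
  proof (rule subst_agree)
    fix y assume "y \<in> vars_term (ts ! j)"
    moreover have "x \<notin> vars_term (ts ! j)"
      using distinct_concat_disj[OF dist, of i j] that p xin by auto
    ultimately show "\<sigma> y = (\<sigma>(x := u)) y" by auto
  qed
  show ?case using p IH other
    by (auto intro!: nth_equalityI simp: nth_list_update fun_upd_def)
qed

lemma nonlinear_replace:
  assumes S: "ctxt_closed S" and p: "p \<in> poss l" "l |_ p = Var x"
    and st: "\<And>y. (\<sigma> y, \<tau> y) \<in> S\<^sup>*"
  shows "(replace_at (l \<cdot> \<sigma>) p (\<tau> x), l \<cdot> \<tau>) \<in> S\<^sup>*"
  using p
proof (induction l arbitrary: p)
  case (Var y) then show ?case by (cases p) auto
next
  case (Fun f ts)
  then obtain i p' where pi: "p = i # p'" "i < length ts" "p' \<in> poss (ts ! i)"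
    by (cases p) auto
  have xi: "ts ! i |_ p' = Var x" using Fun.prems pi by simp
  have IH: "(replace_at (ts ! i \<cdot> \<sigma>) p' (\<tau> x), ts ! i \<cdot> \<tau>) \<in> S\<^sup>*"
    using Fun.IH[OF nth_mem[OF pi(2)] pi(3) xi] .
  let ?ts = "(map (\<lambda>t. t \<cdot> \<sigma>) ts)[i := replace_at (ts ! i \<cdot> \<sigma>) p' (\<tau> x)]"
  have "(Fun f ([] @ ?ts), Fun f ([] @ map (\<lambda>t. t \<cdot> \<tau>) ts)) \<in> S\<^sup>*"
  proof (rule args_steps[OF S])
    show "\<forall>j<length ?ts. (?ts ! j, map (\<lambda>t. t \<cdot> \<tau>) ts ! j) \<in> S\<^sup>*"
    proof (intro allI impI)
      fix j assume j: "j < length ?ts"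
      show "(?ts ! j, map (\<lambda>t. t \<cdot> \<tau>) ts ! j) \<in> S\<^sup>*"
      proof (cases "j = i")
        case True then show ?thesis using IH pi j by simp
      next
        case False then show ?thesis using j subst_steps[OF S, of _ \<sigma> \<tau>] st by simp
      qed
    qed
  qed simp
  then show ?case using pi by simp
qed

lemma size_subt_le: "q \<in> poss t \<Longrightarrow> size (t |_ q) \<le> size t"
  using size_subt_less[of q t] by (cases "q = []") auto




definition gt :: "('f, 'v) rule set \<Rightarrow> ('f, 'v) rule set \<Rightarrow> (('f, 'v) term \<times> ('f, 'v) term) set" where
  "gt R B = (relmod R B)\<^sup>+"

definition uniqNF :: "('f, 'v) rule set \<Rightarrow> ('f, 'v) rule set \<Rightarrow> ('f, 'v) term \<Rightarrow> bool" where
  "uniqNF R B v \<longleftrightarrow> (\<forall>v' n n'. (v, v') \<in> conv B \<longrightarrow> (v, n) \<in> (rstep R)\<^sup>* \<longrightarrow> NF R n \<longrightarrow>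
      (v', n') \<in> (rstep R)\<^sup>* \<longrightarrow> NF R n' \<longrightarrow> (n, n') \<in> conv B)"

definition eqv :: "('f, 'v) rule set \<Rightarrow> ('f, 'v) rule set \<Rightarrow> ('f, 'v) term \<Rightarrow> ('f, 'v) term \<Rightarrow> bool" where
  "eqv R B t u \<longleftrightarrow> (\<exists>n n'. (t, n) \<in> (rstep R)\<^sup>* \<and> NF R n \<and> (u, n') \<in> (rstep R)\<^sup>* \<and> NF R n' \<and> (n, n') \<in> conv B)"

lemma wf_gt: "terminating_mod R B \<Longrightarrow> wf ((gt R B)\<inverse>)"
proof -
  assume "terminating_mod R B"
  then have "wf ((relmod R B)\<inverse>)" unfolding terminating_mod_def wf_iff_no_infinite_down_chain by simp
  then have "wf (((relmod R B)\<inverse>)\<^sup>+)" by (rule wf_trancl)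
  then show ?thesis unfolding gt_def by (simp add: trancl_converse)
qed

lemma relmod_step: "(s, w) \<in> conv B \<Longrightarrow> (w, t) \<in> rstep R \<Longrightarrow> (s, t) \<in> relmod R B"
  unfolding relmod_def simB_def by (meson conv_refl relcomp.relcompI)

lemma gt_step: "(s, w) \<in> conv B \<Longrightarrow> (w, t) \<in> rstep R \<Longrightarrow> (s, t) \<in> gt R B"
  unfolding gt_def using relmod_step by blast

lemma relmod_conv_right: "(s, t) \<in> relmod R B \<Longrightarrow> (t, u) \<in> conv B \<Longrightarrow> (s, u) \<in> relmod R B"
  unfolding relmod_def simB_def by (meson conv_trans relcomp.simps)

lemma relmod_conv_left: "(u, s) \<in> conv B \<Longrightarrow> (s, t) \<in> relmod R B \<Longrightarrow> (u, t) \<in> relmod R B"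
  unfolding relmod_def simB_def by (meson conv_trans relcomp.simps)

lemma gt_conv: "(s, t) \<in> gt R B \<Longrightarrow> (t, u) \<in> conv B \<Longrightarrow> (s, u) \<in> gt R B"
  unfolding gt_def
proof -
  assume st: "(s, t) \<in> (relmod R B)\<^sup>+" and tu: "(t, u) \<in> conv B"
  from st show "(s, u) \<in> (relmod R B)\<^sup>+"
  proof (cases rule: tranclE)
    case base then show ?thesis using relmod_conv_right tu by blast
  next
    case (step c) then show ?thesis using relmod_conv_right tu
      by (meson trancl.trancl_into_trancl)
  qed
qed

lemma conv_gt: "(u, s) \<in> conv B \<Longrightarrow> (s, t) \<in> gt R B \<Longrightarrow> (u, t) \<in> gt R B"
  unfolding gt_def
proof -
  assume us: "(u, s) \<in> conv B" and st: "(s, t) \<in> (relmod R B)\<^sup>+"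
  from st show "(u, t) \<in> (relmod R B)\<^sup>+"
  proof (rule converse_tranclE)
    assume "(s, t) \<in> relmod R B" then show ?thesis using relmod_conv_left us by blast
  next
    fix c assume "(s, c) \<in> relmod R B" "(c, t) \<in> (relmod R B)\<^sup>+"
    then show ?thesis using relmod_conv_left us by (meson trancl_into_trancl2)
  qed
qed

lemma gt_rsteps: "(s, t) \<in> gt R B \<Longrightarrow> (t, u) \<in> (rstep R)\<^sup>* \<Longrightarrow> (s, u) \<in> gt R B"
proof -
  assume st: "(s, t) \<in> gt R B" and tu: "(t, u) \<in> (rstep R)\<^sup>*"
  from tu show ?thesis
  proof induction
    case base then show ?case using st by simp
  next
    case (step y z)
    then have "(y, z) \<in> relmod R B" using relmod_step[of y y B z R] by simp
    then show ?case using step unfolding gt_def by simp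
  qed
qed

lemma SN_NF:
  assumes "terminating_mod R B"
  shows "\<exists>n. (t, n) \<in> (rstep R)\<^sup>* \<and> NF R n"
proof -
  have wf: "wf ((gt R B)\<inverse>)" using wf_gt[OF assms] .
  show ?thesis
  proof (induction t rule: wf_induct[OF wf])
    case (1 t)
    show ?case
    proof (cases "NF R t")
      case True then show ?thesis by blast
    next
      case False
      then obtain t' where t': "(t, t') \<in> rstep R" unfolding NF_def by blast
      then have "(t', t) \<in> (gt R B)\<inverse>" using gt_step[of t t B t' R] by simp
      then obtain n where "(t', n) \<in> (rstep R)\<^sup>*" "NF R n" using 1 by blast
      then show ?thesis using t' by (meson converse_rtrancl_into_rtrancl)
    qed
  qed
qed

lemma join_mod_sym: "(t, u) \<in> join_mod R B \<Longrightarrow> (u, t) \<in> join_mod R B"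
  unfolding join_mod_def simB_def using conv_sym by blast

lemma join_modI: "(t, a) \<in> (rstep R)\<^sup>* \<Longrightarrow> (a, b) \<in> conv B \<Longrightarrow> (u, b) \<in> (rstep R)\<^sup>* \<Longrightarrow> (t, u) \<in> join_mod R B"
  unfolding join_mod_def simB_def by blast

lemma join_modE: "(t, u) \<in> join_mod R B \<Longrightarrow> (\<And>a b. (t, a) \<in> (rstep R)\<^sup>* \<Longrightarrow> (a, b) \<in> conv B \<Longrightarrow> (u, b) \<in> (rstep R)\<^sup>* \<Longrightarrow> P) \<Longrightarrow> P"
  unfolding join_mod_def simB_def by blast

lemma join_mod_ctxt_subst:
  assumes "(c, d) \<in> join_mod R B" "q \<in> poss C"
  shows "(replace_at C q (c \<cdot> \<delta>), replace_at C q (d \<cdot> \<delta>)) \<in> join_mod R B"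
proof -
  from assms(1) obtain a b where ab: "(c, a) \<in> (rstep R)\<^sup>*" "(a, b) \<in> conv B" "(d, b) \<in> (rstep R)\<^sup>*"
    by (rule join_modE)
  have S1: "ctxt_closed ((rstep R)\<^sup>*)" "subst_closed ((rstep R)\<^sup>*)"
    by (rule ctxt_closed_rsteps, rule subst_closed_rsteps)
  have S2: "ctxt_closed (conv B)" "subst_closed (conv B)"
    by (rule ctxt_closed_conv_rel, rule subst_closed_conv_rel)
  have "(replace_at C q (c \<cdot> \<delta>), replace_at C q (a \<cdot> \<delta>)) \<in> (rstep R)\<^sup>*"
    using S1 ab(1) assms(2) unfolding ctxt_closed_def subst_closed_def by blast
  moreover have "(replace_at C q (a \<cdot> \<delta>), replace_at C q (b \<cdot> \<delta>)) \<in> conv B"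
    using S2 ab(2) assms(2) unfolding ctxt_closed_def subst_closed_def by blast
  moreover have "(replace_at C q (d \<cdot> \<delta>), replace_at C q (b \<cdot> \<delta>)) \<in> (rstep R)\<^sup>*"
    using S1 ab(3) assms(2) unfolding ctxt_closed_def subst_closed_def by blast
  ultimately show ?thesis by (rule join_modI)
qed

locale cr_ctx =
  fixes R B :: "('f, 'v) rule set" and s :: "('f, 'v) term"
  assumes inf: "infinite (UNIV :: 'v set)"
    and wfR: "wf_trs R"
    and vpB: "var_preserving B"
    and llR: "left_linear R"
    and trm: "terminating_mod R B"
    and pcps: "PCP R \<union> PCPpm R (Bpm B) \<subseteq> join_mod R B"
    and IH: "\<And>v. (s, v) \<in> gt R B \<Longrightarrow> uniqNF R B v"
begin

lemma nf: "\<exists>n. (t, n) \<in> (rstep R)\<^sup>* \<and> NF R n"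
  using SN_NF[OF trm] .

lemma irrefl: "(t, t) \<notin> gt R B"
  using wf_gt[OF trm] by (metis converse_iff wf_not_refl)

lemma below_not_conv: "(s, t) \<in> gt R B \<Longrightarrow> (t, s) \<in> conv B \<Longrightarrow> False"
  using gt_conv irrefl by blast

lemma eqv_sym: "eqv R B t u \<Longrightarrow> eqv R B u t"
  unfolding eqv_def using conv_sym by blast

lemma eqv_trans: "eqv R B t u \<Longrightarrow> eqv R B u v \<Longrightarrow> (s, u) \<in> gt R B \<Longrightarrow> eqv R B t v"
proof -
  assume "eqv R B t u" "eqv R B u v" and u: "(s, u) \<in> gt R B"
  then obtain n1 n2 n3 n4 where n: "(t, n1) \<in> (rstep R)\<^sup>*" "NF R n1" "(u, n2) \<in> (rstep R)\<^sup>*" "NF R n2"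
    "(n1, n2) \<in> conv B" "(u, n3) \<in> (rstep R)\<^sup>*" "NF R n3" "(v, n4) \<in> (rstep R)\<^sup>*" "NF R n4" "(n3, n4) \<in> conv B"
    unfolding eqv_def by blast
  have "(n2, n3) \<in> conv B" using IH[OF u] n unfolding uniqNF_def by (meson conv_refl)
  then have "(n1, n4) \<in> conv B" using n conv_trans by blast
  then show ?thesis using n unfolding eqv_def by blast
qed

lemma eqv_join: "(s, t) \<in> gt R B \<Longrightarrow> (t, u) \<in> join_mod R B \<Longrightarrow> eqv R B t u"
proof -
  assume t: "(s, t) \<in> gt R B" and j: "(t, u) \<in> join_mod R B"
  from j obtain a b where ab: "(t, a) \<in> (rstep R)\<^sup>*" "(a, b) \<in> conv B" "(u, b) \<in> (rstep R)\<^sup>*"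
    by (rule join_modE)
  have a: "(s, a) \<in> gt R B" using gt_rsteps t ab by blast
  obtain na where na: "(a, na) \<in> (rstep R)\<^sup>*" "NF R na" using nf by blast
  obtain nb where nb: "(b, nb) \<in> (rstep R)\<^sup>*" "NF R nb" using nf by blast
  have "(na, nb) \<in> conv B" using IH[OF a] ab na nb unfolding uniqNF_def by blast
  then show ?thesis unfolding eqv_def using ab na nb by (meson rtrancl_trans)
qed

lemma LCo_from_join:
  assumes w: "(s, w) \<in> conv B" and wt: "(w, t) \<in> rstep R" and u: "(s, u) \<in> conv B"
    and j: "(t, u) \<in> join_mod R B"
  shows "\<exists>e. (u, e) \<in> rstep R \<and> eqv R B t e"
proof -
  have t: "(s, t) \<in> gt R B" using gt_step w wt by blast
  from j obtain a b where ab: "(t, a) \<in> (rstep R)\<^sup>*" "(a, b) \<in> conv B" "(u, b) \<in> (rstep R)\<^sup>*"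
    by (rule join_modE)
  from ab(3) show ?thesis
  proof (cases rule: converse_rtranclE)
    case base
    have "(s, b) \<in> gt R B" using gt_rsteps[OF t ab(1)] ab(2) gt_conv by blast
    then show ?thesis using base u conv_sym below_not_conv by blast
  next
    case (step e)
    then have "(t, e) \<in> join_mod R B" using ab by (meson join_modI)
    then show ?thesis using eqv_join[OF t] step by blast
  qed
qed

lemma LC_par:
  assumes w: "(s, w) \<in> conv B" and pq: "par p1 p2"
    and t: "(w, t) \<in> rsa R p1" and u: "(w, u) \<in> rsa R p2"
  shows "eqv R B t u"
proof -
  from t obtain l1 r1 \<sigma>1 where 1: "(l1, r1) \<in> R" "p1 \<in> poss w" "w |_ p1 = l1 \<cdot> \<sigma>1" "t = replace_at w p1 (r1 \<cdot> \<sigma>1)"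
    unfolding rsa_def by blast
  from u obtain l2 r2 \<sigma>2 where 2: "(l2, r2) \<in> R" "p2 \<in> poss w" "w |_ p2 = l2 \<cdot> \<sigma>2" "u = replace_at w p2 (r2 \<cdot> \<sigma>2)"
    unfolding rsa_def by blast
  let ?v = "replace_at t p2 (r2 \<cdot> \<sigma>2)"
  have P1: "p2 \<in> poss t" "t |_ p2 = l2 \<cdot> \<sigma>2" using par_poss_replace[OF pq 1(2) 2(2)] 1 2 by auto
  have P2: "p1 \<in> poss u" "u |_ p1 = l1 \<cdot> \<sigma>1" using par_poss_replace[OF par_sym[OF pq] 2(2) 1(2)] 1 2 by auto
  have v: "?v = replace_at u p1 (r1 \<cdot> \<sigma>1)" using par_poss_replace[OF pq 1(2) 2(2)] 1 2 by auto
  have "(t, ?v) \<in> rstep R" using P1 2(1) unfolding rstep_def by blast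
  moreover have "(u, ?v) \<in> rstep R" using P2 1(1) v unfolding rstep_def by blast
  ultimately have "(t, u) \<in> join_mod R B" by (meson join_modI conv_refl r_into_rtrancl)
  moreover have "(s, t) \<in> gt R B" using gt_step w t rstep_rsa by blast
  ultimately show ?thesis using eqv_join by blast
qed

lemma LCo_par:
  assumes w: "(s, w) \<in> conv B" and pq: "par p1 p2"
    and t: "(w, t) \<in> rsa R p1" and u: "(w, u) \<in> rsa (Bpm B) p2"
  shows "\<exists>e. (u, e) \<in> rstep R \<and> eqv R B t e"
proof -
  from t obtain l1 r1 \<sigma>1 where 1: "(l1, r1) \<in> R" "p1 \<in> poss w" "w |_ p1 = l1 \<cdot> \<sigma>1" "t = replace_at w p1 (r1 \<cdot> \<sigma>1)"
    unfolding rsa_def by blast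
  from u obtain l2 r2 \<sigma>2 where 2: "(l2, r2) \<in> Bpm B" "p2 \<in> poss w" "w |_ p2 = l2 \<cdot> \<sigma>2" "u = replace_at w p2 (r2 \<cdot> \<sigma>2)"
    unfolding rsa_def by blast
  let ?v = "replace_at t p2 (r2 \<cdot> \<sigma>2)"
  have P1: "p2 \<in> poss t" "t |_ p2 = l2 \<cdot> \<sigma>2" using par_poss_replace[OF pq 1(2) 2(2)] 1 2 by auto
  have P2: "p1 \<in> poss u" "u |_ p1 = l1 \<cdot> \<sigma>1" using par_poss_replace[OF par_sym[OF pq] 2(2) 1(2)] 1 2 by auto
  have v: "?v = replace_at u p1 (r1 \<cdot> \<sigma>1)" using par_poss_replace[OF pq 1(2) 2(2)] 1 2 by auto
  have "(t, ?v) \<in> rstep (Bpm B)" using P1 2(1) unfolding rstep_def by blast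
  then have tv: "(t, ?v) \<in> conv B" by (rule conv_Bpm)
  have uv: "(u, ?v) \<in> rstep R" using P2 1(1) v unfolding rstep_def by blast
  have "(t, ?v) \<in> join_mod R B" using tv by (meson join_modI rtrancl.rtrancl_refl)
  moreover have "(s, t) \<in> gt R B" using gt_step w t rstep_rsa by blast
  ultimately show ?thesis using eqv_join uv by blast
qed

end




definition meas :: "('f, 'v) term \<Rightarrow> pos \<Rightarrow> pos \<Rightarrow> nat" where
  "meas w p1 p2 = (if \<exists>r. p2 = p1 @ r then size (w |_ p2) else if \<exists>r. p1 = p2 @ r then size (w |_ p1) else 0)"

lemma meas1: "meas w p (p @ r) = size (w |_ (p @ r))"
  unfolding meas_def by auto

lemma meas2: "meas w (p @ r) p = size (w |_ (p @ r))"
  unfolding meas_def by auto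

lemma root_step: "(l, r) \<in> E \<Longrightarrow> (l \<cdot> \<sigma>, r \<cdot> \<sigma>) \<in> rstep E"
  unfolding rstep_def by (intro CollectI case_prodI exI[of _ l] exI[of _ r] exI[of _ "[]"] exI[of _ \<sigma>]) auto

lemma nested_decomp:
  assumes t: "(w, t) \<in> rsa E1 (q @ pp)" and u: "(w, u) \<in> rsa E2 q"
  obtains la ra \<sigma>a lb rb \<sigma>b where "(la, ra) \<in> E1" "(lb, rb) \<in> E2" "q \<in> poss w" "w |_ q = lb \<cdot> \<sigma>b"
    "pp \<in> poss (lb \<cdot> \<sigma>b)" "(lb \<cdot> \<sigma>b) |_ pp = la \<cdot> \<sigma>a" "w |_ (q @ pp) = la \<cdot> \<sigma>a"
    "t = replace_at w q (replace_at (lb \<cdot> \<sigma>b) pp (ra \<cdot> \<sigma>a))" "u = replace_at w q (rb \<cdot> \<sigma>b)"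
proof -
  from t obtain la ra \<sigma>a where 1: "(la, ra) \<in> E1" "q @ pp \<in> poss w" "w |_ (q @ pp) = la \<cdot> \<sigma>a"
      "t = replace_at w (q @ pp) (ra \<cdot> \<sigma>a)"
    unfolding rsa_def by blast
  from u obtain lb rb \<sigma>b where 2: "(lb, rb) \<in> E2" "q \<in> poss w" "w |_ q = lb \<cdot> \<sigma>b" "u = replace_at w q (rb \<cdot> \<sigma>b)"
    unfolding rsa_def by blast
  have "pp \<in> poss (lb \<cdot> \<sigma>b)" using 1(2) 2(3) by (simp add: poss_append)
  moreover have "(lb \<cdot> \<sigma>b) |_ pp = la \<cdot> \<sigma>a" using 1(3) 2(2,3) by (simp add: subt_at_append)
  moreover have "t = replace_at w q (replace_at (lb \<cdot> \<sigma>b) pp (ra \<cdot> \<sigma>a))"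
    using 1(4) 2(2,3) by (simp add: replace_at_append)
  ultimately show ?thesis using that 1 2 by blast
qed

lemma var_decomp:
  assumes pp: "pp \<in> poss (lb \<cdot> \<sigma>b)" "pp \<notin> fun_poss lb" and eq: "(lb \<cdot> \<sigma>b) |_ pp = la \<cdot> \<sigma>a"
    and rule: "(la, ra) \<in> E"
  obtains o1 o2 x where "pp = o1 @ o2" "o1 \<in> poss lb" "lb |_ o1 = Var x"
    "(\<sigma>b x, replace_at (\<sigma>b x) o2 (ra \<cdot> \<sigma>a)) \<in> rstep E"
    "replace_at (lb \<cdot> \<sigma>b) pp (ra \<cdot> \<sigma>a) = replace_at (lb \<cdot> \<sigma>b) o1 (replace_at (\<sigma>b x) o2 (ra \<cdot> \<sigma>a))"
proof -
  obtain o1 o2 x where o: "pp = o1 @ o2" "o1 \<in> poss lb" "lb |_ o1 = Var x" "o2 \<in> poss (\<sigma>b x)"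
    using poss_subst_cases[OF pp] by blast
  have o1: "o1 \<in> poss (lb \<cdot> \<sigma>b)" "(lb \<cdot> \<sigma>b) |_ o1 = \<sigma>b x"
    using o by (auto simp: subst_poss subst_subt_at)
  have "(\<sigma>b x) |_ o2 = la \<cdot> \<sigma>a" using eq o o1 by (simp add: subt_at_append)
  then have "(\<sigma>b x, replace_at (\<sigma>b x) o2 (ra \<cdot> \<sigma>a)) \<in> rsa E o2"
    using rule o(4) unfolding rsa_def by blast
  then have "(\<sigma>b x, replace_at (\<sigma>b x) o2 (ra \<cdot> \<sigma>a)) \<in> rstep E" using rstep_rsa by blast
  moreover have "replace_at (lb \<cdot> \<sigma>b) pp (ra \<cdot> \<sigma>a) = replace_at (lb \<cdot> \<sigma>b) o1 (replace_at (\<sigma>b x) o2 (ra \<cdot> \<sigma>a))"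
    using o o1 by (simp add: replace_at_append)
  ultimately show ?thesis using that o by blast
qed

lemma nonprime:
  assumes P: "P \<in> poss w" and np: "\<not> (\<forall>q' \<in> poss (w |_ P). q' \<noteq> [] \<longrightarrow> NF R ((w |_ P) |_ q'))"
  shows "\<exists>P' w'. (w, w') \<in> rsa R P' \<and> (\<exists>r. P' = P @ r) \<and> size (w |_ P') < size (w |_ P)"
proof -
  from np obtain q' v where q': "q' \<in> poss (w |_ P)" "q' \<noteq> []" "((w |_ P) |_ q', v) \<in> rstep R"
    unfolding NF_def by blast
  then obtain r where r: "((w |_ P) |_ q', v) \<in> rsa R r" using rstep_rsa by blast
  have Pq: "P @ q' \<in> poss w" using P q' by (simp add: poss_append)
  have eq: "w |_ (P @ q') = (w |_ P) |_ q'" using P by (simp add: subt_at_append)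
  have "(replace_at w (P @ q') ((w |_ P) |_ q'), replace_at w (P @ q') v) \<in> rsa R ((P @ q') @ r)"
    using rsa_ctxt[OF r Pq] .
  moreover have "replace_at w (P @ q') ((w |_ P) |_ q') = w" using Pq eq by (metis replace_at_id)
  ultimately have st: "(w, replace_at w (P @ q') v) \<in> rsa R (P @ (q' @ r))" by simp
  have rp: "r \<in> poss ((w |_ P) |_ q')" using rsa_poss[OF r] .
  then have "q' @ r \<in> poss (w |_ P)" using q' by (simp add: poss_append)
  then have "size ((w |_ P) |_ (q' @ r)) < size (w |_ P)" using q' by (intro size_subt_less) auto
  moreover have "w |_ (P @ (q' @ r)) = (w |_ P) |_ (q' @ r)" using P by (simp add: subt_at_append)
  ultimately have "size (w |_ (P @ (q' @ r))) < size (w |_ P)" by simp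
  then show ?thesis using st by blast
qed

context cr_ctx
begin

lemma eqv_refl: "eqv R B t t"
  using nf unfolding eqv_def by (meson conv_refl)

lemma below_step: "(s, w) \<in> conv B \<Longrightarrow> (w, t) \<in> rsa R p \<Longrightarrow> (s, t) \<in> gt R B"
  using gt_step rstep_rsa by blast

lemma vrbR: "(lb, rb) \<in> R \<Longrightarrow> vars_term rb \<subseteq> vars_term lb"
  using wfR unfolding wf_trs_def by blast

lemma vrbB: "(lb, rb) \<in> Bpm B \<Longrightarrow> vars_term rb \<subseteq> vars_term lb"
  using vpB unfolding var_preserving_def Bpm_def by auto

lemma linR: "(lb, rb) \<in> R \<Longrightarrow> linear_term lb"
  using llR unfolding left_linear_def by blast

lemma LC_nested:
  assumes w: "(s, w) \<in> conv B"
    and t: "(w, t) \<in> rsa R (q @ pp)" and u: "(w, u) \<in> rsa R q"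
    and IHLC: "\<And>t' u' p1 p2. (w, t') \<in> rsa R p1 \<Longrightarrow> (w, u') \<in> rsa R p2 \<Longrightarrow>
        meas w p1 p2 < size (w |_ (q @ pp)) \<Longrightarrow> eqv R B t' u'"
  shows "eqv R B t u"
proof -
  obtain la ra \<sigma>a lb rb \<sigma>b where d: "(la, ra) \<in> R" "(lb, rb) \<in> R" "q \<in> poss w" "w |_ q = lb \<cdot> \<sigma>b"
    "pp \<in> poss (lb \<cdot> \<sigma>b)" "(lb \<cdot> \<sigma>b) |_ pp = la \<cdot> \<sigma>a" "w |_ (q @ pp) = la \<cdot> \<sigma>a"
    "t = replace_at w q (replace_at (lb \<cdot> \<sigma>b) pp (ra \<cdot> \<sigma>a))" "u = replace_at w q (rb \<cdot> \<sigma>b)"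
    by (rule nested_decomp[OF t u])
  have tb: "(s, t) \<in> gt R B" using below_step w t by blast
  have qpp: "q @ pp \<in> poss w" using t rsa_poss by blast
  show ?thesis
  proof (cases "pp \<in> fun_poss lb")
    case True
    show ?thesis
    proof (cases "\<forall>q' \<in> poss (w |_ (q @ pp)). q' \<noteq> [] \<longrightarrow> NF R ((w |_ (q @ pp)) |_ q')")
      case True
      then have pr: "\<forall>q' \<in> poss (la \<cdot> \<sigma>a). q' \<noteq> [] \<longrightarrow> NF R ((la \<cdot> \<sigma>a) |_ q')" using d by simp
      from cp_instance[OF inf d(1) d(2) vrbR[OF d(2)] \<open>pp \<in> fun_poss lb\<close> d(6) pr]
      consider "replace_at (lb \<cdot> \<sigma>b) pp (ra \<cdot> \<sigma>a) = rb \<cdot> \<sigma>b"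
        | c d' \<delta> where "(c, d') \<in> pcp_gen R R R" "replace_at (lb \<cdot> \<sigma>b) pp (ra \<cdot> \<sigma>a) = c \<cdot> \<delta>" "rb \<cdot> \<sigma>b = d' \<cdot> \<delta>"
        by blast
      then show ?thesis
      proof cases
        case 1 then show ?thesis using d eqv_refl by simp
      next
        case 2
        then have "(c, d') \<in> join_mod R B" using pcps unfolding PCP_def by blast
        then have "(t, u) \<in> join_mod R B" using join_mod_ctxt_subst[OF _ d(3)] d 2 by metis
        then show ?thesis using eqv_join tb by blast
      qed
    next
      case False
      then obtain P' w' where P': "(w, w') \<in> rsa R P'" "\<exists>r. P' = (q @ pp) @ r" "size (w |_ P') < size (w |_ (q @ pp))"
        using nonprime[OF qpp] by blast
      then obtain r where r: "P' = (q @ pp) @ r" by blast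
      have "eqv R B t w'" using IHLC[OF t P'(1)] P'(3) r meas1[of w "q @ pp" r] by simp
      moreover have "eqv R B u w'" using IHLC[OF u P'(1)] P'(3) r meas1[of w q "pp @ r"] by simp
      moreover have "(s, w') \<in> gt R B" using below_step w P'(1) by blast
      ultimately show ?thesis using eqv_trans eqv_sym by blast
    qed
  next
    case False
    obtain o1 o2 x where v: "pp = o1 @ o2" "o1 \<in> poss lb" "lb |_ o1 = Var x"
      "(\<sigma>b x, replace_at (\<sigma>b x) o2 (ra \<cdot> \<sigma>a)) \<in> rstep R"
      "replace_at (lb \<cdot> \<sigma>b) pp (ra \<cdot> \<sigma>a) = replace_at (lb \<cdot> \<sigma>b) o1 (replace_at (\<sigma>b x) o2 (ra \<cdot> \<sigma>a))"
      by (rule var_decomp[OF d(5) False d(6) d(1)])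
    define \<tau> where "\<tau> = \<sigma>b(x := replace_at (\<sigma>b x) o2 (ra \<cdot> \<sigma>a))"
    have lt: "replace_at (lb \<cdot> \<sigma>b) pp (ra \<cdot> \<sigma>a) = lb \<cdot> \<tau>"
      using v linear_replace[OF linR[OF d(2)] v(2,3)] unfolding \<tau>_def by simp
    have "(t, replace_at w q (rb \<cdot> \<tau>)) \<in> rstep R"
      using rstep_ctxt[OF root_step[OF d(2)] d(3)] d(8) lt by simp
    moreover have "(u, replace_at w q (rb \<cdot> \<tau>)) \<in> (rstep R)\<^sup>*"
    proof -
      have "(rb \<cdot> \<sigma>b, rb \<cdot> \<tau>) \<in> (rstep R)\<^sup>*"
        by (rule subst_steps[OF ctxt_closed_rstep]) (use v(4) in \<open>auto simp: \<tau>_def\<close>)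
      then show ?thesis using ctxt_closed_rsteps d(3,9) unfolding ctxt_closed_def by blast
    qed
    ultimately have "(t, u) \<in> join_mod R B" by (meson join_modI conv_refl r_into_rtrancl)
    then show ?thesis using eqv_join tb by blast
  qed
qed

end




context cr_ctx
begin

lemma ctxt_conv_B: "(a, b) \<in> conv B \<Longrightarrow> q \<in> poss C \<Longrightarrow> (replace_at C q a, replace_at C q b) \<in> conv B"
  using ctxt_closed_conv_rel unfolding ctxt_closed_def by blast

lemma ctxt_rsteps_R: "(a, b) \<in> (rstep R)\<^sup>* \<Longrightarrow> q \<in> poss C \<Longrightarrow> (replace_at C q a, replace_at C q b) \<in> (rstep R)\<^sup>*"
  using ctxt_closed_rsteps unfolding ctxt_closed_def by blast

lemma LCo_nested_Rout:
  assumes w: "(s, w) \<in> conv B"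
    and t: "(w, t) \<in> rsa R q" and u: "(w, u) \<in> rsa (Bpm B) (q @ pp)"
    and IHLC: "\<And>t' u' p1 p2. (w, t') \<in> rsa R p1 \<Longrightarrow> (w, u') \<in> rsa R p2 \<Longrightarrow>
        meas w p1 p2 < size (w |_ (q @ pp)) \<Longrightarrow> eqv R B t' u'"
    and IHLCo: "\<And>t' u' p1 p2. (w, t') \<in> rsa R p1 \<Longrightarrow> (w, u') \<in> rsa (Bpm B) p2 \<Longrightarrow>
        meas w p1 p2 < size (w |_ (q @ pp)) \<Longrightarrow> \<exists>e. (u', e) \<in> rstep R \<and> eqv R B t' e"
  shows "\<exists>e. (u, e) \<in> rstep R \<and> eqv R B t e"
proof -
  obtain la ra \<sigma>a lb rb \<sigma>b where d: "(la, ra) \<in> Bpm B" "(lb, rb) \<in> R" "q \<in> poss w" "w |_ q = lb \<cdot> \<sigma>b"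
    "pp \<in> poss (lb \<cdot> \<sigma>b)" "(lb \<cdot> \<sigma>b) |_ pp = la \<cdot> \<sigma>a" "w |_ (q @ pp) = la \<cdot> \<sigma>a"
    "u = replace_at w q (replace_at (lb \<cdot> \<sigma>b) pp (ra \<cdot> \<sigma>a))" "t = replace_at w q (rb \<cdot> \<sigma>b)"
    by (rule nested_decomp[OF u t])
  have tb: "(s, t) \<in> gt R B" using below_step w t by blast
  have wt: "(w, t) \<in> rstep R" using t rstep_rsa by blast
  have us: "(s, u) \<in> conv B" using w u conv_Bpm conv_trans rstep_rsa by blast
  have qpp: "q @ pp \<in> poss w" using u rsa_poss by blast
  show ?thesis
  proof (cases "pp \<in> fun_poss lb")
    case True
    show ?thesis
    proof (cases "\<forall>q' \<in> poss (w |_ (q @ pp)). q' \<noteq> [] \<longrightarrow> NF R ((w |_ (q @ pp)) |_ q')")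
      case True
      then have pr: "\<forall>q' \<in> poss (la \<cdot> \<sigma>a). q' \<noteq> [] \<longrightarrow> NF R ((la \<cdot> \<sigma>a) |_ q')" using d by simp
      from cp_instance[OF inf d(1) d(2) vrbR[OF d(2)] \<open>pp \<in> fun_poss lb\<close> d(6) pr]
      consider "replace_at (lb \<cdot> \<sigma>b) pp (ra \<cdot> \<sigma>a) = rb \<cdot> \<sigma>b"
        | c d' \<delta> where "(c, d') \<in> pcp_gen (Bpm B) R R" "replace_at (lb \<cdot> \<sigma>b) pp (ra \<cdot> \<sigma>a) = c \<cdot> \<delta>" "rb \<cdot> \<sigma>b = d' \<cdot> \<delta>"
        by blast
      then show ?thesis
      proof cases
        case 1
        then have "u = t" using d by simp
        then show ?thesis using tb us conv_sym below_not_conv by blast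
      next
        case 2
        then have "(c, d') \<in> join_mod R B" using pcps unfolding PCPpm_def by blast
        then have "(u, t) \<in> join_mod R B" using join_mod_ctxt_subst[OF _ d(3)] d 2 by metis
        then show ?thesis using LCo_from_join[OF w wt us] join_mod_sym by blast
      qed
    next
      case False
      then obtain P' w' where P': "(w, w') \<in> rsa R P'" "\<exists>r. P' = (q @ pp) @ r" "size (w |_ P') < size (w |_ (q @ pp))"
        using nonprime[OF qpp] by blast
      then obtain r where r: "P' = (q @ pp) @ r" by blast
      obtain e where e: "(u, e) \<in> rstep R" "eqv R B w' e"
        using IHLCo[OF P'(1) u] P'(3) r meas2[of w "q @ pp" r] by auto
      have "eqv R B t w'" using IHLC[OF t P'(1)] P'(3) r meas1[of w q "pp @ r"] by simp
      moreover have "(s, w') \<in> gt R B" using below_step w P'(1) by blast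
      ultimately show ?thesis using eqv_trans e by blast
    qed
  next
    case False
    obtain o1 o2 x where v: "pp = o1 @ o2" "o1 \<in> poss lb" "lb |_ o1 = Var x"
      "(\<sigma>b x, replace_at (\<sigma>b x) o2 (ra \<cdot> \<sigma>a)) \<in> rstep (Bpm B)"
      "replace_at (lb \<cdot> \<sigma>b) pp (ra \<cdot> \<sigma>a) = replace_at (lb \<cdot> \<sigma>b) o1 (replace_at (\<sigma>b x) o2 (ra \<cdot> \<sigma>a))"
      by (rule var_decomp[OF d(5) False d(6) d(1)])
    define \<tau> where "\<tau> = \<sigma>b(x := replace_at (\<sigma>b x) o2 (ra \<cdot> \<sigma>a))"
    have lt: "replace_at (lb \<cdot> \<sigma>b) pp (ra \<cdot> \<sigma>a) = lb \<cdot> \<tau>"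
      using v linear_replace[OF linR[OF d(2)] v(2,3)] unfolding \<tau>_def by simp
    let ?e = "replace_at w q (rb \<cdot> \<tau>)"
    have ue: "(u, ?e) \<in> rstep R"
      using rstep_ctxt[OF root_step[OF d(2)] d(3)] d(8) lt by simp
    have "(rb \<cdot> \<sigma>b, rb \<cdot> \<tau>) \<in> (rstep B \<union> (rstep B)\<inverse>)\<^sup>*"
    proof (rule subst_steps)
      show "ctxt_closed (rstep B \<union> (rstep B)\<inverse>)"
        by (intro ctxt_closed_Un ctxt_closed_conv ctxt_closed_rstep)
      show "(\<sigma>b y, \<tau> y) \<in> (rstep B \<union> (rstep B)\<inverse>)\<^sup>*" for y
        using conv_Bpm[OF v(4)] unfolding \<tau>_def conv_def by auto
    qed
    then have "(t, ?e) \<in> conv B" using ctxt_conv_B d(3,9) unfolding conv_def by blast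
    then have "(t, ?e) \<in> join_mod R B" by (meson join_modI rtrancl.rtrancl_refl)
    then show ?thesis using eqv_join tb ue by blast
  qed
qed

lemma LCo_nested_Bout:
  assumes w: "(s, w) \<in> conv B"
    and t: "(w, t) \<in> rsa R (q @ pp)" and u: "(w, u) \<in> rsa (Bpm B) q"
    and IHLC: "\<And>t' u' p1 p2. (w, t') \<in> rsa R p1 \<Longrightarrow> (w, u') \<in> rsa R p2 \<Longrightarrow>
        meas w p1 p2 < size (w |_ (q @ pp)) \<Longrightarrow> eqv R B t' u'"
    and IHLCo: "\<And>t' u' p1 p2. (w, t') \<in> rsa R p1 \<Longrightarrow> (w, u') \<in> rsa (Bpm B) p2 \<Longrightarrow>
        meas w p1 p2 < size (w |_ (q @ pp)) \<Longrightarrow> \<exists>e. (u', e) \<in> rstep R \<and> eqv R B t' e"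
  shows "\<exists>e. (u, e) \<in> rstep R \<and> eqv R B t e"
proof -
  obtain la ra \<sigma>a lb rb \<sigma>b where d: "(la, ra) \<in> R" "(lb, rb) \<in> Bpm B" "q \<in> poss w" "w |_ q = lb \<cdot> \<sigma>b"
    "pp \<in> poss (lb \<cdot> \<sigma>b)" "(lb \<cdot> \<sigma>b) |_ pp = la \<cdot> \<sigma>a" "w |_ (q @ pp) = la \<cdot> \<sigma>a"
    "t = replace_at w q (replace_at (lb \<cdot> \<sigma>b) pp (ra \<cdot> \<sigma>a))" "u = replace_at w q (rb \<cdot> \<sigma>b)"
    by (rule nested_decomp[OF t u])
  have tb: "(s, t) \<in> gt R B" using below_step w t by blast
  have wt: "(w, t) \<in> rstep R" using t rstep_rsa by blast
  have us: "(s, u) \<in> conv B" using w u conv_Bpm conv_trans rstep_rsa by blast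
  have qpp: "q @ pp \<in> poss w" using t rsa_poss by blast
  show ?thesis
  proof (cases "pp \<in> fun_poss lb")
    case True
    show ?thesis
    proof (cases "\<forall>q' \<in> poss (w |_ (q @ pp)). q' \<noteq> [] \<longrightarrow> NF R ((w |_ (q @ pp)) |_ q')")
      case True
      then have pr: "\<forall>q' \<in> poss (la \<cdot> \<sigma>a). q' \<noteq> [] \<longrightarrow> NF R ((la \<cdot> \<sigma>a) |_ q')" using d by simp
      from cp_instance[OF inf d(1) d(2) vrbB[OF d(2)] \<open>pp \<in> fun_poss lb\<close> d(6) pr]
      consider "replace_at (lb \<cdot> \<sigma>b) pp (ra \<cdot> \<sigma>a) = rb \<cdot> \<sigma>b"
        | c d' \<delta> where "(c, d') \<in> pcp_gen R (Bpm B) R" "replace_at (lb \<cdot> \<sigma>b) pp (ra \<cdot> \<sigma>a) = c \<cdot> \<delta>" "rb \<cdot> \<sigma>b = d' \<cdot> \<delta>"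
        by blast
      then show ?thesis
      proof cases
        case 1
        then have "u = t" using d by simp
        then show ?thesis using tb us conv_sym below_not_conv by blast
      next
        case 2
        then have "(c, d') \<in> join_mod R B" using pcps unfolding PCPpm_def by blast
        then have "(t, u) \<in> join_mod R B" using join_mod_ctxt_subst[OF _ d(3)] d 2 by metis
        then show ?thesis using LCo_from_join[OF w wt us] by blast
      qed
    next
      case False
      then obtain P' w' where P': "(w, w') \<in> rsa R P'" "\<exists>r. P' = (q @ pp) @ r" "size (w |_ P') < size (w |_ (q @ pp))"
        using nonprime[OF qpp] by blast
      then obtain r where r: "P' = (q @ pp) @ r" by blast
      obtain e where e: "(u, e) \<in> rstep R" "eqv R B w' e"
        using IHLCo[OF P'(1) u] P'(3) r meas2[of w q "pp @ r"] by auto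
      have "eqv R B t w'" using IHLC[OF t P'(1)] P'(3) r meas1[of w "q @ pp" r] by simp
      moreover have "(s, w') \<in> gt R B" using below_step w P'(1) by blast
      ultimately show ?thesis using eqv_trans e by blast
    qed
  next
    case False
    obtain o1 o2 x where v: "pp = o1 @ o2" "o1 \<in> poss lb" "lb |_ o1 = Var x"
      "(\<sigma>b x, replace_at (\<sigma>b x) o2 (ra \<cdot> \<sigma>a)) \<in> rstep R"
      "replace_at (lb \<cdot> \<sigma>b) pp (ra \<cdot> \<sigma>a) = replace_at (lb \<cdot> \<sigma>b) o1 (replace_at (\<sigma>b x) o2 (ra \<cdot> \<sigma>a))"
      by (rule var_decomp[OF d(5) False d(6) d(1)])
    define \<tau> where "\<tau> = \<sigma>b(x := replace_at (\<sigma>b x) o2 (ra \<cdot> \<sigma>a))"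
    have st: "(\<sigma>b y, \<tau> y) \<in> (rstep R)\<^sup>*" for y using v(4) unfolding \<tau>_def by auto
    have "(replace_at (lb \<cdot> \<sigma>b) o1 (\<tau> x), lb \<cdot> \<tau>) \<in> (rstep R)\<^sup>*"
      by (rule nonlinear_replace[OF ctxt_closed_rstep v(2,3) st])
    then have "(t, replace_at w q (lb \<cdot> \<tau>)) \<in> (rstep R)\<^sup>*"
      using ctxt_rsteps_R[OF _ d(3)] d(8) v(5) unfolding \<tau>_def by simp
    moreover have "(replace_at w q (lb \<cdot> \<tau>), replace_at w q (rb \<cdot> \<tau>)) \<in> conv B"
      using ctxt_conv_B[OF conv_Bpm[OF root_step[OF d(2)]] d(3)] .
    moreover have "(u, replace_at w q (rb \<cdot> \<tau>)) \<in> (rstep R)\<^sup>*"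
      using ctxt_rsteps_R[OF subst_steps[OF ctxt_closed_rstep st] d(3)] d(9) by simp
    ultimately have "(t, u) \<in> join_mod R B" by (rule join_modI)
    then show ?thesis using LCo_from_join[OF w wt us] by blast
  qed
qed

end




context cr_ctx
begin

lemma peaks:
  "\<forall>w t u p1 p2. (s, w) \<in> conv B \<longrightarrow> meas w p1 p2 = n \<longrightarrow>
     ((w, t) \<in> rsa R p1 \<longrightarrow> (w, u) \<in> rsa R p2 \<longrightarrow> eqv R B t u) \<and>
     ((w, t) \<in> rsa R p1 \<longrightarrow> (w, u) \<in> rsa (Bpm B) p2 \<longrightarrow> (\<exists>e. (u, e) \<in> rstep R \<and> eqv R B t e))"
proof (induction n rule: less_induct)
  case (less n)
  show ?case
  proof (intro allI impI)
    fix w t u p1 p2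
    assume w: "(s, w) \<in> conv B" and m: "meas w p1 p2 = n"
    have IHLC: "eqv R B t' u'" if "(w, t') \<in> rsa R p1'" "(w, u') \<in> rsa R p2'" "meas w p1' p2' < n"
      for t' u' p1' p2' using less.IH[OF that(3)] w that(1,2) by blast
    have IHLCo: "\<exists>e. (u', e) \<in> rstep R \<and> eqv R B t' e" if "(w, t') \<in> rsa R p1'" "(w, u') \<in> rsa (Bpm B) p2'" "meas w p1' p2' < n"
      for t' u' p1' p2' using less.IH[OF that(3)] w that(1,2) by blast
    consider "par p1 p2" | r where "p2 = p1 @ r" | r where "p1 = p2 @ r" unfolding par_def by blast
    then show "((w, t) \<in> rsa R p1 \<longrightarrow> (w, u) \<in> rsa R p2 \<longrightarrow> eqv R B t u) \<and>
     ((w, t) \<in> rsa R p1 \<longrightarrow> (w, u) \<in> rsa (Bpm B) p2 \<longrightarrow> (\<exists>e. (u, e) \<in> rstep R \<and> eqv R B t e))"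
    proof cases
      case 1 then show ?thesis using LC_par[OF w] LCo_par[OF w] by blast
    next
      case (2 r)
      then have n: "n = size (w |_ (p1 @ r))" using m meas1 by metis
      show ?thesis
      proof (intro conjI impI)
        assume "(w, t) \<in> rsa R p1" "(w, u) \<in> rsa R p2"
        then show "eqv R B t u" using LC_nested[OF w, of u p1 r t] IHLC 2 n eqv_sym by blast
      next
        assume "(w, t) \<in> rsa R p1" "(w, u) \<in> rsa (Bpm B) p2"
        then show "\<exists>e. (u, e) \<in> rstep R \<and> eqv R B t e"
          using LCo_nested_Rout[OF w, of t p1 u r] IHLC IHLCo 2 n by blast
      qed
    next
      case (3 r)
      then have n: "n = size (w |_ (p2 @ r))" using m meas2 by metis
      show ?thesis
      proof (intro conjI impI)
        assume "(w, t) \<in> rsa R p1" "(w, u) \<in> rsa R p2"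
        then show "eqv R B t u" using LC_nested[OF w, of t p2 r u] IHLC 3 n by blast
      next
        assume "(w, t) \<in> rsa R p1" "(w, u) \<in> rsa (Bpm B) p2"
        then show "\<exists>e. (u, e) \<in> rstep R \<and> eqv R B t e"
          using LCo_nested_Bout[OF w, of t p2 r u] IHLC IHLCo 3 n by blast
      qed
    qed
  qed
qed

lemma LC: "(s, w) \<in> conv B \<Longrightarrow> (w, t) \<in> rstep R \<Longrightarrow> (w, u) \<in> rstep R \<Longrightarrow> eqv R B t u"
  using peaks unfolding rstep_rsa by blast

lemma LCo: "(s, w) \<in> conv B \<Longrightarrow> (w, t) \<in> rstep R \<Longrightarrow> (w, u) \<in> rstep (Bpm B) \<Longrightarrow>
    \<exists>e. (u, e) \<in> rstep R \<and> eqv R B t e"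
  using peaks unfolding rstep_rsa by blast

lemma prop_class:
  assumes v: "(s, v) \<in> conv B" and a: "(v, a) \<in> rstep R" and vv: "(v, v') \<in> conv B"
  shows "\<exists>a'. (v', a') \<in> rstep R \<and> eqv R B a a'"
  using vv unfolding conv_def
proof (induction rule: rtrancl_induct)
  case base then show ?case using a eqv_refl by blast
next
  case (step y z)
  then obtain ay where ay: "(y, ay) \<in> rstep R" "eqv R B a ay" by blast
  have sy: "(s, y) \<in> conv B" using v step(1) conv_trans unfolding conv_def by blast
  have "(y, z) \<in> rstep (Bpm B)" using step(2) rstep_Bpm by blast
  then obtain e where e: "(z, e) \<in> rstep R" "eqv R B ay e" using LCo[OF sy ay(1)] by blast
  have "(s, ay) \<in> gt R B" using gt_step sy ay(1) by blast
  then have "eqv R B a e" using eqv_trans ay(2) e(2) by blast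
  then show ?case using e(1) by blast
qed

lemma uniq_s: "uniqNF R B s"
  unfolding uniqNF_def
proof (intro allI impI)
  fix s' n n'
  assume ss: "(s, s') \<in> conv B" and sn: "(s, n) \<in> (rstep R)\<^sup>*" and n: "NF R n"
    and sn': "(s', n') \<in> (rstep R)\<^sup>*" and n': "NF R n'"
  from sn show "(n, n') \<in> conv B"
  proof (cases rule: converse_rtranclE)
    case base
    have "NF R s'"
    proof (rule ccontr)
      assume "\<not> NF R s'"
      then obtain a where "(s', a) \<in> rstep R" unfolding NF_def by blast
      then obtain a' where "(s, a') \<in> rstep R"
        using prop_class[OF ss _ conv_sym[OF ss]] by blast
      then show False using n base unfolding NF_def by blast
    qed
    then have "s' = n'" using sn' unfolding NF_def by (metis converse_rtranclE)
    then show ?thesis using base ss by simp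
  next
    case (step a)
    obtain a' where a': "(s', a') \<in> rstep R" "eqv R B a a'" using prop_class[OF conv_refl step(1) ss] by blast
    from sn' obtain b where b: "(s', b) \<in> rstep R" "(b, n') \<in> (rstep R)\<^sup>*"
    proof (cases rule: converse_rtranclE)
      case base then show ?thesis using a'(1) n' unfolding NF_def by blast
    next
      case (step b) then show ?thesis using that by blast
    qed
    have "eqv R B a' b" using LC[OF ss a'(1) b(1)] .
    moreover have "(s, a') \<in> gt R B" using gt_step ss a'(1) by blast
    ultimately have "eqv R B a b" using eqv_trans a'(2) by blast
    then obtain na nb where nab: "(a, na) \<in> (rstep R)\<^sup>*" "NF R na" "(b, nb) \<in> (rstep R)\<^sup>*" "NF R nb" "(na, nb) \<in> conv B"
      unfolding eqv_def by blast
    have ab: "(s, a) \<in> gt R B" "(s, b) \<in> gt R B" using gt_step ss step(1) b(1) by (blast intro: conv_refl)+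
    have "(n, na) \<in> conv B" using IH[OF ab(1)] step(2) n nab unfolding uniqNF_def by (meson conv_refl)
    moreover have "(nb, n') \<in> conv B" using IH[OF ab(2)] b(2) n' nab unfolding uniqNF_def by (meson conv_refl)
    ultimately show ?thesis using nab(5) conv_trans by blast
  qed
qed

end

lemma pcp_in_X:
  assumes X1: "rstep R1 \<subseteq> X" and X2: "rstep R2 \<subseteq> X"
    and sy: "sym X" and tr: "trans X"
    and cd: "(c, d) \<in> pcp_gen R1 R2 R"
  shows "(c, d) \<in> X"
proof -
  from cd obtain \<rho>1 p \<rho>2 \<mu> where c: "c = replace_at (fst \<rho>2 \<cdot> \<mu>) p (snd \<rho>1 \<cdot> \<mu>)" "d = snd \<rho>2 \<cdot> \<mu>"
    and ov: "overlap R1 R2 \<rho>1 p \<rho>2" and mu: "is_mgu \<mu> (fst \<rho>1) (fst \<rho>2 |_ p)"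
    unfolding pcp_gen_def by blast
  from ov obtain \<rho>a \<rho>b where a: "\<rho>a \<in> R1" "variant_of \<rho>1 \<rho>a" and b: "\<rho>b \<in> R2" "variant_of \<rho>2 \<rho>b"
    and p: "p \<in> fun_poss (fst \<rho>2)" unfolding overlap_def by blast
  obtain la ra where \<rho>a: "\<rho>a = (la, ra)" by (cases \<rho>a)
  obtain lb rb where \<rho>b: "\<rho>b = (lb, rb)" by (cases \<rho>b)
  obtain \<tau> where \<tau>: "fst \<rho>1 \<cdot> \<mu> = la \<cdot> \<tau>" "snd \<rho>1 \<cdot> \<mu> = ra \<cdot> \<tau>"
    using variant_step[of "fst \<rho>1" "snd \<rho>1" la ra \<mu>] a(2) \<rho>a by auto
  obtain \<tau>' where \<tau>': "fst \<rho>2 \<cdot> \<mu> = lb \<cdot> \<tau>'" "snd \<rho>2 \<cdot> \<mu> = rb \<cdot> \<tau>'"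
    using variant_step[of "fst \<rho>2" "snd \<rho>2" lb rb \<mu>] b(2) \<rho>b by auto
  have pp: "p \<in> poss (fst \<rho>2)" using p fun_poss_poss by blast
  have "p \<in> poss (fst \<rho>2 \<cdot> \<mu>)" using subst_poss[OF pp] .
  moreover have "(fst \<rho>2 \<cdot> \<mu>) |_ p = la \<cdot> \<tau>" using mu pp \<tau> unfolding is_mgu_def by (simp add: subst_subt_at)
  moreover have "(la, ra) \<in> R1" using a(1) \<rho>a by simp
  moreover have "c = replace_at (fst \<rho>2 \<cdot> \<mu>) p (ra \<cdot> \<tau>)" using c \<tau> by simp
  ultimately have "(fst \<rho>2 \<cdot> \<mu>, c) \<in> rstep R1" unfolding rstep_def by blast
  then have 1: "(c, fst \<rho>2 \<cdot> \<mu>) \<in> X" using X1 sy by (meson subsetD symD)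
  have "(fst \<rho>2 \<cdot> \<mu>, d) \<in> rstep R2" using root_step[of lb rb R2 \<tau>'] b(1) \<rho>b \<tau>' c by simp
  then have "(fst \<rho>2 \<cdot> \<mu>, d) \<in> X" using X2 by blast
  then show ?thesis using 1 tr by (meson transD)
qed

lemma eqv_trans_g: "uniqNF R B u \<Longrightarrow> eqv R B t u \<Longrightarrow> eqv R B u v \<Longrightarrow> eqv R B t v"
proof -
  assume U: "uniqNF R B u" and "eqv R B t u" "eqv R B u v"
  then obtain n1 n2 n3 n4 where n: "(t, n1) \<in> (rstep R)\<^sup>*" "NF R n1" "(u, n2) \<in> (rstep R)\<^sup>*" "NF R n2"
    "(n1, n2) \<in> conv B" "(u, n3) \<in> (rstep R)\<^sup>*" "NF R n3" "(v, n4) \<in> (rstep R)\<^sup>*" "NF R n4" "(n3, n4) \<in> conv B"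
    unfolding eqv_def by blast
  have "(n2, n3) \<in> conv B" using U n unfolding uniqNF_def by (meson conv_refl)
  then have "(n1, n4) \<in> conv B" using n conv_trans by blast
  then show ?thesis using n unfolding eqv_def by blast
qed

theorem theorem3p16:
  fixes R B :: "('f, 'v) rule set"
  assumes "infinite (UNIV :: 'v set)"
    and "wf_trs R"
    and "var_preserving B"
    and "left_linear R"
    and "terminating_mod R B"
  shows "CR_mod R B \<longleftrightarrow> PCP R \<union> PCPpm R (Bpm B) \<subseteq> join_mod R B"
proof
  assume cr: "CR_mod R B"
  let ?X = "conv (R \<union> B)"
  have m1: "rstep R \<subseteq> rstep (R \<union> B)" by (rule rstep_mono) blast
  have m2: "rstep B \<subseteq> rstep (R \<union> B)" by (rule rstep_mono) blast
  have XR: "rstep R \<subseteq> ?X" using m1 by (auto intro: conv_step)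
  have XB: "rstep (Bpm B) \<subseteq> ?X" unfolding rstep_Bpm using m2 by (auto intro: conv_step conv_step_inv)
  have sym: "sym ?X" by (auto intro: symI conv_sym)
  have trans: "trans ?X" by (rule transI) (rule conv_trans)
  have "PCP R \<subseteq> ?X" unfolding PCP_def
  proof (rule subrelI)
    fix x y assume "(x, y) \<in> pcp_gen R R R"
    then show "(x, y) \<in> ?X" by (rule pcp_in_X[OF XR XR sym trans])
  qed
  moreover have "PCPpm R (Bpm B) \<subseteq> ?X" unfolding PCPpm_def
  proof (intro Un_least subrelI)
    fix x y assume "(x, y) \<in> pcp_gen R (Bpm B) R"
    then show "(x, y) \<in> ?X" by (rule pcp_in_X[OF XR XB sym trans])
  next
    fix x y assume "(x, y) \<in> pcp_gen (Bpm B) R R"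
    then show "(x, y) \<in> ?X" by (rule pcp_in_X[OF XB XR sym trans])
  qed
  ultimately show "PCP R \<union> PCPpm R (Bpm B) \<subseteq> join_mod R B" using cr unfolding CR_mod_def by blast
next
  assume pcps: "PCP R \<union> PCPpm R (Bpm B) \<subseteq> join_mod R B"
  have U: "uniqNF R B s" for s
  proof (induction s rule: wf_induct[OF wf_gt[OF assms(5)]])
    case (1 s)
    interpret c: cr_ctx R B s
      by unfold_locales (use assms pcps 1 in auto)
    show ?case by (rule c.uniq_s)
  qed
  have nf: "\<exists>n. (t, n) \<in> (rstep R)\<^sup>* \<and> NF R n" for t using SN_NF[OF assms(5)] .
  have eqv_refl: "eqv R B t t" for t using nf unfolding eqv_def by (meson conv_refl)
  have "eqv R B x y" if "(x, y) \<in> conv (R \<union> B)" for x y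
    using that unfolding conv_def
  proof (induction rule: rtrancl_induct)
    case base then show ?case using eqv_refl by simp
  next
    case (step y z)
    have "eqv R B y z"
    proof -
      from step(2) have "(y, z) \<in> rstep R \<union> rstep B \<or> (z, y) \<in> rstep R \<union> rstep B"
        unfolding rstep_union by blast
      then consider "(y, z) \<in> rstep R" | "(z, y) \<in> rstep R" | "(y, z) \<in> conv B"
        using conv_step conv_step_inv by blast
      then show ?thesis
      proof cases
        case 1
        obtain n where "(z, n) \<in> (rstep R)\<^sup>*" "NF R n" using nf by blast
        then show ?thesis using 1 unfolding eqv_def by (meson conv_refl converse_rtrancl_into_rtrancl)
      next
        case 2
        obtain n where "(y, n) \<in> (rstep R)\<^sup>*" "NF R n" using nf by blast
        then show ?thesis using 2 unfolding eqv_def by (meson conv_refl converse_rtrancl_into_rtrancl)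
      next
        case 3
        obtain n where n: "(y, n) \<in> (rstep R)\<^sup>*" "NF R n" using nf by blast
        obtain n' where n': "(z, n') \<in> (rstep R)\<^sup>*" "NF R n'" using nf by blast
        have "(n, n') \<in> conv B" using U[of y] 3 n n' unfolding uniqNF_def by blast
        then show ?thesis using n n' unfolding eqv_def by blast
      qed
    qed
    then show ?case using eqv_trans_g[OF U step(3)] by blast
  qed
  then show "CR_mod R B" unfolding CR_mod_def
  proof (intro subrelI)
    fix x y assume "(x, y) \<in> conv (R \<union> B)"
    then have "eqv R B x y" using \<open>\<And>x y. (x, y) \<in> conv (R \<union> B) \<Longrightarrow> eqv R B x y\<close> by blast
    then obtain n n' where "(x, n) \<in> (rstep R)\<^sup>*" "(n, n') \<in> conv B" "(y, n') \<in> (rstep R)\<^sup>*"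
      unfolding eqv_def by blast
    then show "(x, y) \<in> join_mod R B" by (rule join_modI)
  qed
qed



end
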